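(* Let $p\in\mathbb{C}[z,w]$ have no zeros in $\mathbb{B}_2$ with $p(0,1)=0$, with local factorization $p(z,w)=a(z)\prod_{j=1}^n(1-h_j(z)w)$ on $\mathbb{D}(\epsilon)\times\mathbb{D}(1,\epsilon)$ as in the context. Let $s\in(-1,\infty)$ and $\beta$ with $b:=\beta-s-2>0$, and set $U_j=\Omega_j\times\mathbb{D}(1,\epsilon)$. Then there is $C>0$ (independent of $r\in(0,1)$ as $r\to1^-$) such that $$\int_{\mathbb{B}_2\cap U_j}\frac{(1-|z|^2-|w|^2)^s}{|1-rh_j(rz)w|^\beta}\,dA(z,w)\le C\int_{\Omega_j}\frac{dA(z)}{\big(1-r^2|h_j(rz)|^2(1-|z|^2)\big)^b}.$$
   Context: $\mathbb{B}_2=\{|z|^2+|w|^2<1\}$, $\mathbb{D}(\epsilon)=\{|z|<\epsilon\}$, $\mathbb{D}(1,\epsilon)=\{|z-1|<\epsilon\}$; $dA$ denotes normalized area (Lebesgue) measure. In the factorization, $a$ is non-vanishing holomorphic on $\mathbb{D}(\epsilon)$ and each $h_j$ is a branch of an algebraic function, a single-valued holomorphic function on a dense simply connected subdomain $\Omega_j$ of $\mathbb{D}(\epsilon)\setminus\{0\}$, of Puiseux form $h_j(z)=\Phi_j(z^{1/k_j})$ with $\Phi_j$ holomorphic near $0$. *)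

theory Defs
  imports "HOL-Analysis.Analysis"
begin

definition is_poly2 :: "(complex \<Rightarrow> complex \<Rightarrow> complex) \<Rightarrow> bool" where
  "is_poly2 p \<longleftrightarrow> (\<exists>N::nat. \<exists>c::nat \<Rightarrow> nat \<Rightarrow> complex.
      \<forall>z w. p z w = (\<Sum>i\<le>N. \<Sum>j\<le>N. c i j * z ^ i * w ^ j))"

definition ball2 :: "(complex \<times> complex) set" where
  "ball2 = {(z, w). (cmod z)\<^sup>2 + (cmod w)\<^sup>2 < 1}"

definition puiseux_on :: "complex set \<Rightarrow> (complex \<Rightarrow> complex) \<Rightarrow> bool" where
  "puiseux_on \<Omega> h \<longleftrightarrow> (\<exists>k::nat. k \<ge> 1 \<and> (\<exists>\<rho> \<Phi> \<delta>. \<delta> > 0 \<and>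
      \<rho> holomorphic_on \<Omega> \<and> (\<forall>z\<in>\<Omega>. \<rho> z ^ k = z) \<and>
      \<Phi> holomorphic_on ball 0 \<delta> \<and> \<rho> ` \<Omega> \<subseteq> ball 0 \<delta> \<and>
      (\<forall>z\<in>\<Omega>. h z = \<Phi> (\<rho> z))))"

end

theory Submission
  imports Defs "HOL-Complex_Analysis.Complex_Analysis"
begin

lemma measurable_Complex_pair[measurable]: "(\<lambda>(x,y). Complex x y) \<in> borel_measurable (borel :: (real \<times> real) measure)"
proof -
  have "continuous_on UNIV (\<lambda>p::real\<times>real. Complex (fst p) (snd p))"
    by (simp add: Complex_eq case_prod_unfold) (intro continuous_intros)
  then show ?thesis by (simp add: borel_measurable_continuous_onI case_prod_unfold)
qed

lemma measurable_Complex_fs[measurable]: "(\<lambda>p. Complex (fst p) (snd p)) \<in> borel_measurable (borel :: (real \<times> real) measure)"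
  using measurable_Complex_pair by (simp add: case_prod_unfold)

lemma measurable_Complex_sf[measurable]: "(\<lambda>p. Complex (snd p) (fst p)) \<in> borel_measurable (borel :: (real \<times> real) measure)"
proof -
  have "continuous_on UNIV (\<lambda>p::real\<times>real. Complex (snd p) (fst p))"
    by (simp add: Complex_eq) (intro continuous_intros)
  then show ?thesis by (simp add: borel_measurable_continuous_onI)
qed

lemma meas_ind:
  fixes f :: "'a::euclidean_space \<Rightarrow> ennreal"
  assumes [measurable]: "S \<in> sets borel" "f \<in> borel_measurable borel"
  shows "(\<lambda>x. indicator S x * f x) \<in> borel_measurable lborel"
proof -
  have "(\<lambda>x. indicator S x * f x) \<in> borel_measurable borel" by measurable
  then show ?thesis by (simp add: measurable_lborel1)
qed

lemma lborel_complex: "lborel = distr (lborel :: (real \<times> real) measure) borel (\<lambda>(x,y). Complex x y)"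
proof (rule lborel_eqI)
  fix l u :: complex
  assume le: "\<And>b. b \<in> Basis \<Longrightarrow> l \<bullet> b \<le> u \<bullet> b"
  then have le1: "Re l \<le> Re u" and le2: "Im l \<le> Im u"
    using le[of 1] le[of \<i>] by (auto simp: Basis_complex_def)
  have eq: "(\<lambda>(x,y). Complex x y) -` box l u \<inter> space (lborel :: (real \<times> real) measure) = {Re l<..<Re u} \<times> {Im l<..<Im u}"
    by (auto simp: in_box_complex_iff)
  show "emeasure (distr (lborel :: (real \<times> real) measure) borel (\<lambda>(x,y). Complex x y)) (box l u) = (\<Prod>b\<in>Basis. (u - l) \<bullet> b)"
    apply (subst emeasure_distr)
      apply simp
     apply simp
    apply (subst eq)
    apply (subst lborel_prod[symmetric])
    apply (subst lborel.emeasure_pair_measure_Times)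
    using le1 le2 by (auto simp: Basis_complex_def ennreal_mult)
qed simp

lemma nn_integral_complex_xy:
  assumes f: "f \<in> borel_measurable borel"
  shows "(\<integral>\<^sup>+u. f u \<partial>lborel) = (\<integral>\<^sup>+x. \<integral>\<^sup>+y. f (Complex x y) \<partial>lborel \<partial>lborel)"
proof -
  have "(\<integral>\<^sup>+u. f u \<partial>lborel) = (\<integral>\<^sup>+p. f (Complex (fst p) (snd p)) \<partial>(lborel :: (real \<times> real) measure))"
    apply (subst lborel_complex)
    apply (subst nn_integral_distr)
    using f by (auto simp: case_prod_unfold)
  also have "\<dots> = (\<integral>\<^sup>+p. f (Complex (fst p) (snd p)) \<partial>(lborel \<Otimes>\<^sub>M lborel))"
    by (simp add: lborel_prod)
  also have "\<dots> = (\<integral>\<^sup>+x. \<integral>\<^sup>+y. f (Complex x y) \<partial>lborel \<partial>lborel)"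
    apply (subst lborel.nn_integral_fst[symmetric])
    using f by (auto simp: lborel_prod)
  finally show ?thesis .
qed

lemma nn_integral_complex_yx:
  assumes f: "f \<in> borel_measurable borel"
  shows "(\<integral>\<^sup>+u. f u \<partial>lborel) = (\<integral>\<^sup>+y. \<integral>\<^sup>+x. f (Complex x y) \<partial>lborel \<partial>lborel)"
proof -
  have "(\<integral>\<^sup>+u. f u \<partial>lborel) = (\<integral>\<^sup>+x. \<integral>\<^sup>+y. f (Complex x y) \<partial>lborel \<partial>lborel)"
    by (rule nn_integral_complex_xy[OF f])
  also have "\<dots> = (\<integral>\<^sup>+y. \<integral>\<^sup>+x. f (Complex x y) \<partial>lborel \<partial>lborel)"
    apply (rule pair_sigma_finite.Fubini')
    using f by (auto simp: pair_sigma_finite_def lborel.sigma_finite_measure_axioms lborel_prod case_prod_unfold)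
  finally show ?thesis .
qed

lemma slice1D:
  fixes m p q :: real
  assumes m: "m > 0" and pq: "p \<le> q"
  shows "emeasure lborel {x::real. m \<le> \<bar>x\<bar> \<and> p < x\<^sup>2 \<and> x\<^sup>2 < q} \<le> ennreal ((q - p) / m)"
proof (cases "m\<^sup>2 < q")
  case False
  then have "{x::real. m \<le> \<bar>x\<bar> \<and> p < x\<^sup>2 \<and> x\<^sup>2 < q} = {}"
  proof (safe)
    fix x :: real assume x: "m \<le> \<bar>x\<bar>" "x\<^sup>2 < q"
    have "m\<^sup>2 \<le> x\<^sup>2" using power_mono[OF x(1), of 2] m by simp
    then show "x \<in> {}" using x(2) False by simp
  qed
  then show ?thesis by (metis emeasure_empty zero_le)
next
  case True
  define a where "a = sqrt (max p (m\<^sup>2))"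
  have am: "a \<ge> m" unfolding a_def
    by (metis real_sqrt_abs real_sqrt_le_mono max.cobounded2 abs_of_pos m)
  have qa: "sqrt q \<ge> a" unfolding a_def using True pq by (intro real_sqrt_le_mono) simp
  have sub: "{x::real. m \<le> \<bar>x\<bar> \<and> p < x\<^sup>2 \<and> x\<^sup>2 < q} \<subseteq> {-sqrt q..-a} \<union> {a..sqrt q}"
  proof
    fix x assume "x \<in> {x::real. m \<le> \<bar>x\<bar> \<and> p < x\<^sup>2 \<and> x\<^sup>2 < q}"
    then have x: "m \<le> \<bar>x\<bar>" "p < x\<^sup>2" "x\<^sup>2 < q" by auto
    have "m\<^sup>2 \<le> x\<^sup>2" using power_mono[OF x(1), of 2] m by simp
    then have "a \<le> sqrt (x\<^sup>2)" unfolding a_def using x(2) by (intro real_sqrt_le_mono) simp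
    then have "a \<le> \<bar>x\<bar>" by simp
    moreover have "sqrt (x\<^sup>2) \<le> sqrt q" using x(3) by (intro real_sqrt_le_mono) simp
    then have "\<bar>x\<bar> \<le> sqrt q" by simp
    ultimately show "x \<in> {-sqrt q..-a} \<union> {a..sqrt q}" by auto
  qed
  have len: "sqrt q - a \<le> (q - p) / (2*m)"
  proof -
    have e1: "(sqrt q - a) * (sqrt q + a) = (sqrt q)\<^sup>2 - a\<^sup>2" by algebra
    have e2: "(sqrt q)\<^sup>2 = q" using True by (smt (verit) real_sqrt_pow2 zero_le_power2)
    have e3: "a\<^sup>2 = max p (m\<^sup>2)" unfolding a_def by (smt (verit) real_sqrt_pow2 zero_le_power2)
    have "(sqrt q - a) * (sqrt q + a) = q - max p (m\<^sup>2)"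
      using e1 e2 e3 by simp
    also have "\<dots> \<le> q - p" by simp
    finally have "(sqrt q - a) * (sqrt q + a) \<le> q - p" .
    moreover have "sqrt q + a \<ge> 2*m" using am qa by simp
    moreover have "sqrt q - a \<ge> 0" using qa by simp
    ultimately have "(sqrt q - a) * (2*m) \<le> q - p"
      by (smt (verit, best) mult_left_mono)
    then show ?thesis using m by (simp add: field_simps)
  qed
  have "emeasure lborel {x::real. m \<le> \<bar>x\<bar> \<and> p < x\<^sup>2 \<and> x\<^sup>2 < q} \<le> emeasure lborel ({-sqrt q..-a} \<union> {a..sqrt q})"
    by (rule emeasure_mono[OF sub]) simp
  also have "\<dots> \<le> emeasure lborel {-sqrt q..-a} + emeasure lborel {a..sqrt q}"
    by (rule emeasure_subadditive) auto
  also have "\<dots> = ennreal (sqrt q - a) + ennreal (sqrt q - a)"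
    using qa by simp
  also have "\<dots> = ennreal (2 * (sqrt q - a))"
    using qa by (simp add: ennreal_plus[symmetric] del: ennreal_plus)
  also have "\<dots> \<le> ennreal ((q - p) / m)"
    using len m by (intro ennreal_leI) (simp add: field_simps)
  finally show ?thesis .
qed

lemma slice_Re:
  fixes S :: "complex set"
  assumes S: "S \<in> sets borel" and m: "m > 0" and pq: "p \<le> q" and l: "l \<ge> 0"
  and sub: "S \<subseteq> {u. m \<le> \<bar>Re u\<bar> \<and> p < (cmod u)\<^sup>2 \<and> (cmod u)\<^sup>2 < q \<and> \<bar>Im u - yc\<bar> < l}"
  shows "emeasure lborel S \<le> ennreal (2*l*(q-p)/m)"
proof -
  have "emeasure lborel S = (\<integral>\<^sup>+u. indicator S u \<partial>lborel)"
    by (subst nn_integral_indicator) (use S in auto)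
  also have "\<dots> = (\<integral>\<^sup>+y. \<integral>\<^sup>+x. indicator S (Complex x y) \<partial>lborel \<partial>lborel)"
    by (rule nn_integral_complex_yx) (use S in simp)
  also have "\<dots> \<le> (\<integral>\<^sup>+y. indicator {yc-l<..<yc+l} y * ennreal ((q-p)/m) \<partial>lborel)"
  proof (rule nn_integral_mono)
    fix y :: real
    have meas: "{x. Complex x y \<in> S} \<in> sets lborel"
    proof -
      have "(\<lambda>x. Complex x y) \<in> borel_measurable lborel"
        by (simp add: Complex_eq)
      then have "(\<lambda>x. Complex x y) -` S \<inter> space lborel \<in> sets lborel"
        using S by (rule measurable_sets)
      then show ?thesis by (simp add: vimage_def)
    qed
    have ii: "(\<lambda>x. indicator S (Complex x y) :: ennreal) = indicator {x. Complex x y \<in> S}"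
      by (auto simp: indicator_def)
    have eq: "(\<integral>\<^sup>+x. indicator S (Complex x y) \<partial>lborel) = emeasure lborel {x. Complex x y \<in> S}"
      unfolding ii using meas by (rule nn_integral_indicator)
    show "(\<integral>\<^sup>+x. indicator S (Complex x y) \<partial>lborel) \<le> indicator {yc-l<..<yc+l} y * ennreal ((q-p)/m)"
    proof (cases "\<bar>y - yc\<bar> < l")
      case True
      have "{x. Complex x y \<in> S} \<subseteq> {x. m \<le> \<bar>x\<bar> \<and> p - y\<^sup>2 < x\<^sup>2 \<and> x\<^sup>2 < q - y\<^sup>2}"
        using sub by (auto simp: cmod_power2)
      then have "emeasure lborel {x. Complex x y \<in> S} \<le> emeasure lborel {x. m \<le> \<bar>x\<bar> \<and> p - y\<^sup>2 < x\<^sup>2 \<and> x\<^sup>2 < q - y\<^sup>2}"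
        by (rule emeasure_mono) simp
      also have "\<dots> \<le> ennreal ((q - y\<^sup>2 - (p - y\<^sup>2)) / m)"
        by (rule slice1D) (use m pq in auto)
      finally show ?thesis using True eq by (simp add: indicator_def abs_less_iff)
    next
      case False
      then have "{x. Complex x y \<in> S} = {}" using sub by auto
      then show ?thesis using eq by simp
    qed
  qed
  also have "\<dots> = ennreal ((q-p)/m) * emeasure lborel {yc-l<..<yc+l}"
    by (simp add: nn_integral_cmult_indicator mult.commute)
  also have "\<dots> = ennreal (2*l*(q-p)/m)"
    using l m pq by (simp add: ennreal_mult[symmetric] field_simps)
  finally show ?thesis .
qed

lemma slice_Im:
  fixes S :: "complex set"
  assumes S: "S \<in> sets borel" and m: "m > 0" and pq: "p \<le> q" and l: "l \<ge> 0"
  and sub: "S \<subseteq> {u. m \<le> \<bar>Im u\<bar> \<and> p < (cmod u)\<^sup>2 \<and> (cmod u)\<^sup>2 < q \<and> \<bar>Re u - xc\<bar> < l}"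
  shows "emeasure lborel S \<le> ennreal (2*l*(q-p)/m)"
proof -
  have "emeasure lborel S = (\<integral>\<^sup>+u. indicator S u \<partial>lborel)"
    by (subst nn_integral_indicator) (use S in auto)
  also have "\<dots> = (\<integral>\<^sup>+x. \<integral>\<^sup>+y. indicator S (Complex x y) \<partial>lborel \<partial>lborel)"
    by (rule nn_integral_complex_xy) (use S in simp)
  also have "\<dots> \<le> (\<integral>\<^sup>+x. indicator {xc-l<..<xc+l} x * ennreal ((q-p)/m) \<partial>lborel)"
  proof (rule nn_integral_mono)
    fix x :: real
    have meas: "{y. Complex x y \<in> S} \<in> sets lborel"
    proof -
      have "(\<lambda>y. Complex x y) \<in> borel_measurable lborel"
        by (simp add: Complex_eq)
      then have "(\<lambda>y. Complex x y) -` S \<inter> space lborel \<in> sets lborel"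
        using S by (rule measurable_sets)
      then show ?thesis by (simp add: vimage_def)
    qed
    have ii: "(\<lambda>y. indicator S (Complex x y) :: ennreal) = indicator {y. Complex x y \<in> S}"
      by (auto simp: indicator_def)
    have eq: "(\<integral>\<^sup>+y. indicator S (Complex x y) \<partial>lborel) = emeasure lborel {y. Complex x y \<in> S}"
      unfolding ii using meas by (rule nn_integral_indicator)
    show "(\<integral>\<^sup>+y. indicator S (Complex x y) \<partial>lborel) \<le> indicator {xc-l<..<xc+l} x * ennreal ((q-p)/m)"
    proof (cases "\<bar>x - xc\<bar> < l")
      case True
      have "{y. Complex x y \<in> S} \<subseteq> {y. m \<le> \<bar>y\<bar> \<and> p - x\<^sup>2 < y\<^sup>2 \<and> y\<^sup>2 < q - x\<^sup>2}"
        using sub by (auto simp: cmod_power2)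
      then have "emeasure lborel {y. Complex x y \<in> S} \<le> emeasure lborel {y. m \<le> \<bar>y\<bar> \<and> p - x\<^sup>2 < y\<^sup>2 \<and> y\<^sup>2 < q - x\<^sup>2}"
        by (rule emeasure_mono) simp
      also have "\<dots> \<le> ennreal ((q - x\<^sup>2 - (p - x\<^sup>2)) / m)"
        by (rule slice1D) (use m pq in auto)
      finally show ?thesis using True eq by (simp add: indicator_def abs_less_iff)
    next
      case False
      then have "{y. Complex x y \<in> S} = {}" using sub by auto
      then show ?thesis using eq by simp
    qed
  qed
  also have "\<dots> = ennreal ((q-p)/m) * emeasure lborel {xc-l<..<xc+l}"
    by (simp add: nn_integral_cmult_indicator mult.commute)
  also have "\<dots> = ennreal (2*l*(q-p)/m)"
    using l m pq by (simp add: ennreal_mult[symmetric] field_simps)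
  finally show ?thesis .
qed

lemma open_annball: "open {u::complex. dist u \<zeta> < l \<and> a < cmod u \<and> cmod u < b}"
  by (intro open_Collect_conj open_Collect_less continuous_intros)

lemma box_sq_measure:
  assumes "S \<subseteq> {u. \<bar>Re u - Re c\<bar> < l \<and> \<bar>Im u - Im c\<bar> < l}" "l \<ge> 0"
  shows "emeasure lborel S \<le> ennreal (4*l\<^sup>2)"
proof -
  have "S \<subseteq> box (c - Complex l l) (c + Complex l l)"
    using assms(1) by (auto simp: in_box_complex_iff abs_less_iff)
  then have "emeasure lborel S \<le> emeasure lborel (box (c - Complex l l) (c + Complex l l))"
    by (rule emeasure_mono) simp
  also have "\<dots> = ennreal (4*l\<^sup>2)"
    using assms(2) by (simp add: emeasure_lborel_box_eq Basis_complex_def power2_eq_square)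
  finally show ?thesis .
qed

lemma annulus_ball:
  fixes \<zeta> :: complex
  assumes r: "\<rho> > 0" and t: "\<tau> > 0" and l: "l > 0"
  shows "emeasure lborel {u. dist u \<zeta> < l \<and> \<rho> - \<tau> < cmod u \<and> cmod u < \<rho>} \<le> ennreal (300 * l * \<tau>)"
    (is "emeasure lborel ?S \<le> _")
proof -
  have Sb: "?S \<in> sets borel" using open_annball by (rule borel_open)
  have ReIm: "\<bar>Re u - Re \<zeta>\<bar> < l \<and> \<bar>Im u - Im \<zeta>\<bar> < l" if "dist u \<zeta> < l" for u
    using that abs_Re_le_cmod[of "u - \<zeta>"] abs_Im_le_cmod[of "u - \<zeta>"] by (auto simp: dist_norm)
  consider "l \<le> \<tau>" | "\<tau> < l" "\<rho>/8 \<le> l" "\<rho>/2 < \<tau>" | "\<tau> < l" "\<rho>/8 \<le> l" "\<tau> \<le> \<rho>/2" | "\<tau> < l" "l < \<rho>/8"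
    by linarith
  then show ?thesis
  proof cases
    case 1
    have "emeasure lborel ?S \<le> ennreal (4*l\<^sup>2)"
      by (rule box_sq_measure[where c=\<zeta>]) (use ReIm l in auto)
    also have "\<dots> \<le> ennreal (300 * l * \<tau>)"
      using 1 l by (intro ennreal_leI) (simp add: power2_eq_square mult_left_mono)
    finally show ?thesis .
  next
    case 2
    have "emeasure lborel ?S \<le> ennreal (4*\<rho>\<^sup>2)"
      by (rule box_sq_measure[where c=0])
        (use r in \<open>auto dest: abs_Re_le_cmod[THEN order.strict_trans1] abs_Im_le_cmod[THEN order.strict_trans1]\<close>)
    also have "\<dots> \<le> ennreal (300 * l * \<tau>)"
    proof (intro ennreal_leI)
      have "\<rho>/8 * (\<rho>/2) \<le> l * \<tau>" using 2 r by (intro mult_mono) auto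
      moreover have "0 < l * \<tau>" using l t by simp
      moreover have "4*\<rho>\<^sup>2 = 4*(\<rho>*\<rho>)" "300 * l * \<tau> = 300 * (l*\<tau>)" "\<rho>/8 * (\<rho>/2) = (\<rho>*\<rho>)/16"
        by (simp_all add: power2_eq_square)
      ultimately show "4*\<rho>\<^sup>2 \<le> 300 * l * \<tau>" by linarith
    qed
    finally show ?thesis .
  next
    case 3
    define S1 where "S1 = ?S \<inter> {u. \<rho>/4 \<le> \<bar>Re u\<bar>}"
    define S2 where "S2 = ?S \<inter> {u. \<rho>/4 \<le> \<bar>Im u\<bar>}"
    have S1b: "S1 \<in> sets borel" unfolding S1_def using Sb by measurable
    have S2b: "S2 \<in> sets borel" unfolding S2_def using Sb by measurable
    have cover: "?S \<subseteq> S1 \<union> S2"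
    proof
      fix u assume u: "u \<in> ?S"
      have "cmod u \<le> \<bar>Re u\<bar> + \<bar>Im u\<bar>" by (rule cmod_le)
      then show "u \<in> S1 \<union> S2" using u 3 unfolding S1_def S2_def by auto
    qed
    have rt: "\<rho> - \<tau> \<ge> 0" using 3 r by simp
    have sq: "(\<rho> - \<tau>)\<^sup>2 < (cmod u)\<^sup>2 \<and> (cmod u)\<^sup>2 < \<rho>\<^sup>2" if "\<rho> - \<tau> < cmod u" "cmod u < \<rho>" for u
      using that rt by (intro conjI power_strict_mono) auto
    have qp: "\<rho>\<^sup>2 - (\<rho> - \<tau>)\<^sup>2 \<le> 2*\<rho>*\<tau>" using t by (simp add: power2_eq_square algebra_simps)
    have "emeasure lborel S1 \<le> ennreal (2*\<rho>*(\<rho>\<^sup>2 - (\<rho> - \<tau>)\<^sup>2)/(\<rho>/4))"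
      by (rule slice_Re[OF S1b, where yc=0]) (use r rt sq t in \<open>auto simp: S1_def dest: abs_Im_le_cmod[THEN order.strict_trans1]\<close>)
    moreover have "emeasure lborel S2 \<le> ennreal (2*\<rho>*(\<rho>\<^sup>2 - (\<rho> - \<tau>)\<^sup>2)/(\<rho>/4))"
      by (rule slice_Im[OF S2b, where xc=0]) (use r rt sq t in \<open>auto simp: S2_def dest: abs_Re_le_cmod[THEN order.strict_trans1]\<close>)
    moreover have "2*\<rho>*(\<rho>\<^sup>2 - (\<rho> - \<tau>)\<^sup>2)/(\<rho>/4) \<le> 16 * \<rho> * \<tau>"
    proof -
      have "2*\<rho>*(\<rho>\<^sup>2 - (\<rho> - \<tau>)\<^sup>2)/(\<rho>/4) = 8*(\<rho>\<^sup>2 - (\<rho> - \<tau>)\<^sup>2)"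
        using r by (simp add: field_simps)
      also have "\<dots> \<le> 8*(2*\<rho>*\<tau>)" using qp by simp
      finally show ?thesis by simp
    qed
    ultimately have "emeasure lborel S1 + emeasure lborel S2 \<le> ennreal (16 * \<rho> * \<tau>) + ennreal (16 * \<rho> * \<tau>)"
      by (meson add_mono ennreal_leI order_trans)
    also have "\<dots> = ennreal (32 * \<rho> * \<tau>)" using r t by (simp add: ennreal_plus[symmetric] del: ennreal_plus)
    also have "\<dots> \<le> ennreal (300 * l * \<tau>)"
    proof (intro ennreal_leI)
      have "32 * \<rho> * \<tau> \<le> (256 * l) * \<tau>" using 3 t by (intro mult_right_mono) auto
      then show "32 * \<rho> * \<tau> \<le> 300 * l * \<tau>" using l t by simp
    qed
    finally have le: "emeasure lborel S1 + emeasure lborel S2 \<le> ennreal (300 * l * \<tau>)" .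
    have "emeasure lborel ?S \<le> emeasure lborel (S1 \<union> S2)"
      by (rule emeasure_mono[OF cover]) (use S1b S2b in simp)
    also have "\<dots> \<le> emeasure lborel S1 + emeasure lborel S2"
      by (rule emeasure_subadditive) (use S1b S2b in simp_all)
    finally show ?thesis using le by simp
  next
    case 4
    show ?thesis
    proof (cases "?S = {}")
      case True then show ?thesis by (metis emeasure_empty zero_le)
    next
      case False
      then obtain u0 where u0: "u0 \<in> ?S" by blast
      have "cmod \<zeta> \<ge> cmod u0 - dist u0 \<zeta>"
        using norm_triangle_sub[of u0 \<zeta>] by (simp add: dist_norm)
      then have z: "cmod \<zeta> > 3*\<rho>/4" using u0 4 by auto
      have rt: "\<rho> - \<tau> \<ge> 0" using 4 r by simp
      have sq: "(\<rho> - \<tau>)\<^sup>2 < (cmod u)\<^sup>2 \<and> (cmod u)\<^sup>2 < \<rho>\<^sup>2" if "\<rho> - \<tau> < cmod u" "cmod u < \<rho>" for u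
        using that rt by (intro conjI power_strict_mono) auto
      have qp: "\<rho>\<^sup>2 - (\<rho> - \<tau>)\<^sup>2 \<le> 2*\<rho>*\<tau>" using t by (simp add: power2_eq_square algebra_simps)
      have fin: "2*l*(\<rho>\<^sup>2 - (\<rho> - \<tau>)\<^sup>2)/(\<rho>/4) \<le> 300 * l * \<tau>"
      proof -
        have "2*l*(\<rho>\<^sup>2 - (\<rho> - \<tau>)\<^sup>2)/(\<rho>/4) = (8*l) * (\<rho>\<^sup>2 - (\<rho> - \<tau>)\<^sup>2) / \<rho>"
          using r by (simp add: field_simps)
        also have "\<dots> \<le> (8*l) * (2*\<rho>*\<tau>) / \<rho>"
          using qp l r by (intro divide_right_mono mult_left_mono) auto
        also have "\<dots> = 16 * l * \<tau>" using r by (simp add: field_simps)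
        also have "\<dots> \<le> 300 * l * \<tau>" using l t by simp
        finally show ?thesis .
      qed
      have cz: "cmod \<zeta> \<le> \<bar>Re \<zeta>\<bar> + \<bar>Im \<zeta>\<bar>" by (rule cmod_le)
      show ?thesis
      proof (cases "\<bar>Im \<zeta>\<bar> \<le> \<bar>Re \<zeta>\<bar>")
        case True
        then have "\<bar>Re \<zeta>\<bar> > 3*\<rho>/8" using z cz by linarith
        then have "\<rho>/4 \<le> \<bar>Re u\<bar>" if "dist u \<zeta> < l" for u
          using ReIm[OF that] 4 by linarith
        then have "emeasure lborel ?S \<le> ennreal (2*l*(\<rho>\<^sup>2 - (\<rho> - \<tau>)\<^sup>2)/(\<rho>/4))"
          by (intro slice_Re[OF Sb, where yc="Im \<zeta>"]) (use r rt sq ReIm l t in auto)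
        also have "\<dots> \<le> ennreal (300 * l * \<tau>)" using fin by (rule ennreal_leI)
        finally show ?thesis .
      next
        case False
        then have "\<bar>Im \<zeta>\<bar> > 3*\<rho>/8" using z cz by linarith
        then have "\<rho>/4 \<le> \<bar>Im u\<bar>" if "dist u \<zeta> < l" for u
          using ReIm[OF that] 4 by linarith
        then have "emeasure lborel ?S \<le> ennreal (2*l*(\<rho>\<^sup>2 - (\<rho> - \<tau>)\<^sup>2)/(\<rho>/4))"
          by (intro slice_Im[OF Sb, where xc="Re \<zeta>"]) (use r rt sq ReIm l t in auto)
        also have "\<dots> \<le> ennreal (300 * l * \<tau>)" using fin by (rule ennreal_leI)
        finally show ?thesis .
      qed
    qed
  qed
qed

lemma nn_powr_to_inf:
  fixes x e :: real
  assumes x: "x > 0" and e: "e < -1"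
  shows "(\<integral>\<^sup>+\<tau>. ennreal (\<tau> powr e) * indicator {x..} \<tau> \<partial>lborel) = ennreal (x powr (e+1) / (-(e+1)))"
proof -
  have "((\<lambda>\<tau>. \<tau> powr e) has_integral -(x powr (e+1)) / (e+1)) {x..}"
    by (rule has_integral_powr_to_inf) (use x e in auto)
  then have "(\<integral>\<^sup>+\<tau>. ennreal (\<tau> powr e) * indicator {x..} \<tau> \<partial>lborel) = ennreal (-(x powr (e+1)) / (e+1))"
    by (intro nn_integral_has_integral_lebesgue') auto
  moreover have "-(x powr (e+1)) / (e+1) = x powr (e+1) / (-(e+1))"
    using e by (simp add: field_simps)
  ultimately show ?thesis by simp
qed

lemma nn_powr_from_0:
  fixes l a :: real
  assumes l: "l \<ge> 0" and a: "a > -1"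
  shows "(\<integral>\<^sup>+\<tau>. ennreal (\<tau> powr a) * indicator {0..l} \<tau> \<partial>lborel) = ennreal (l powr (a+1) / (a+1))"
proof -
  have "((\<lambda>\<tau>. \<tau> powr a) has_integral (l powr (a+1) / (a+1))) {0..l}"
    by (rule has_integral_powr_from_0) (use l a in auto)
  then show ?thesis
    by (intro nn_integral_has_integral_lebesgue') auto
qed

lemma layer_powr_neg:
  fixes x s :: real
  assumes x: "x > 0" and s: "s < 0"
  shows "ennreal (x powr s) = (\<integral>\<^sup>+\<tau>. ennreal (-s * \<tau> powr (s-1)) * indicator {x..} \<tau> \<partial>lborel)"
proof -
  have "(\<integral>\<^sup>+\<tau>. ennreal (-s * \<tau> powr (s-1)) * indicator {x..} \<tau> \<partial>lborel)
      = (\<integral>\<^sup>+\<tau>. ennreal (-s) * (ennreal (\<tau> powr (s-1)) * indicator {x..} \<tau>) \<partial>lborel)"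
  proof (intro nn_integral_cong)
    fix \<tau> :: real
    have "ennreal (-s * \<tau> powr (s-1)) = ennreal (-s) * ennreal (\<tau> powr (s-1))"
      using s by (intro ennreal_mult) auto
    then show "ennreal (-s * \<tau> powr (s-1)) * indicator {x..} \<tau> = ennreal (-s) * (ennreal (\<tau> powr (s-1)) * indicator {x..} \<tau>)"
      by (simp add: mult.assoc)
  qed
  also have "\<dots> = ennreal (-s) * (\<integral>\<^sup>+\<tau>. ennreal (\<tau> powr (s-1)) * indicator {x..} \<tau> \<partial>lborel)"
    by (rule nn_integral_cmult) simp
  also have "\<dots> = ennreal (-s) * ennreal (x powr (s - 1 + 1) / (-(s - 1 + 1)))"
    by (subst nn_powr_to_inf) (use x s in auto)
  also have "\<dots> = ennreal (-s * (x powr (s - 1 + 1) / (-(s - 1 + 1))))"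
    using s by (subst ennreal_mult) (auto simp: divide_nonneg_neg)
  also have "\<dots> = ennreal (x powr s)"
    using s by simp
  finally show ?thesis by (rule sym)
qed

lemma ennreal_abcd:
  fixes a b c d :: real
  assumes "0 \<le> a" "0 \<le> b" "0 \<le> c" "0 \<le> d"
  shows "ennreal a * ennreal b + ennreal c * ennreal d = ennreal (a*b + c*d)"
  using assms by (simp add: ennreal_plus ennreal_mult)

lemma weight_neg:
  fixes s \<rho> l :: real and \<zeta> :: complex
  assumes s1: "-1 < s" and s0: "s < 0" and r: "\<rho> > 0" and l: "l > 0"
  shows "(\<integral>\<^sup>+u. indicator (ball 0 \<rho> \<inter> ball \<zeta> l) u * ennreal ((\<rho> - cmod u) powr s) \<partial>lborel)
          \<le> ennreal ((600 * (-s)/(s+1) + 4) * l powr (s+2))"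
proof -
  define E where "E = ball 0 \<rho> \<inter> ball \<zeta> l"
  have Eb: "E \<in> sets borel" unfolding E_def by simp
  define F where "F = (\<lambda>p::complex \<times> real. indicator E (fst p) * ennreal (-s * snd p powr (s-1)) * indicator {p. \<rho> - cmod (fst p) \<le> snd p} p)"
  have Fm: "F \<in> borel_measurable (lborel \<Otimes>\<^sub>M lborel)"
  proof -
    have cl: "closed {p::complex \<times> real. \<rho> - cmod (fst p) \<le> snd p}"
      by (intro closed_Collect_le continuous_intros)
    have S1[measurable]: "{p::complex \<times> real. \<rho> - cmod (fst p) \<le> snd p} \<in> sets (lborel \<Otimes>\<^sub>M lborel)"
    proof -
      have "sets (lborel \<Otimes>\<^sub>M lborel) = sets (borel :: (complex \<times> real) measure)"
        by (simp only: lborel_prod sets_lborel)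
      then show ?thesis using borel_closed[OF cl] by simp
    qed
    have [measurable]: "E \<in> sets borel" by (rule Eb)
    show ?thesis
      unfolding F_def by measurable
  qed
  have step1: "(\<integral>\<^sup>+u. indicator E u * ennreal ((\<rho> - cmod u) powr s) \<partial>lborel) = (\<integral>\<^sup>+u. \<integral>\<^sup>+\<tau>. F (u,\<tau>) \<partial>lborel \<partial>lborel)"
  proof (intro nn_integral_cong)
    fix u :: complex
    show "indicator E u * ennreal ((\<rho> - cmod u) powr s) = (\<integral>\<^sup>+\<tau>. F (u,\<tau>) \<partial>lborel)"
    proof (cases "u \<in> E")
      case True
      then have pos: "\<rho> - cmod u > 0" unfolding E_def by auto
      have "(\<integral>\<^sup>+\<tau>. F (u,\<tau>) \<partial>lborel) = (\<integral>\<^sup>+\<tau>. ennreal (-s * \<tau> powr (s-1)) * indicator {\<rho> - cmod u..} \<tau> \<partial>lborel)"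
        using True by (intro nn_integral_cong) (auto simp: F_def indicator_def)
      also have "\<dots> = ennreal ((\<rho> - cmod u) powr s)"
        by (rule layer_powr_neg[symmetric]) (use pos s0 in auto)
      finally show ?thesis using True by simp
    next
      case False
      then show ?thesis by (simp add: F_def)
    qed
  qed
  have step2: "(\<integral>\<^sup>+u. \<integral>\<^sup>+\<tau>. F (u,\<tau>) \<partial>lborel \<partial>lborel) = (\<integral>\<^sup>+\<tau>. \<integral>\<^sup>+u. F (u,\<tau>) \<partial>lborel \<partial>lborel)"
    by (rule pair_sigma_finite.Fubini'[symmetric])
       (use Fm in \<open>auto simp: pair_sigma_finite_def lborel.sigma_finite_measure_axioms\<close>)
  have step3: "(\<integral>\<^sup>+u. F (u,\<tau>) \<partial>lborel) = ennreal (-s * \<tau> powr (s-1)) * emeasure lborel (E \<inter> {u. \<rho> - cmod u \<le> \<tau>})" for \<tau>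
  proof -
    have m: "E \<inter> {u. \<rho> - cmod u \<le> \<tau>} \<in> sets lborel"
    proof -
      have "closed {u::complex. \<rho> - cmod u \<le> \<tau>}" by (intro closed_Collect_le continuous_intros)
      then show ?thesis using Eb by simp
    qed
    have "(\<integral>\<^sup>+u. F (u,\<tau>) \<partial>lborel) = (\<integral>\<^sup>+u. ennreal (-s * \<tau> powr (s-1)) * indicator (E \<inter> {u. \<rho> - cmod u \<le> \<tau>}) u \<partial>lborel)"
      by (intro nn_integral_cong) (auto simp: F_def indicator_def)
    also have "\<dots> = ennreal (-s * \<tau> powr (s-1)) * emeasure lborel (E \<inter> {u. \<rho> - cmod u \<le> \<tau>})"
      using m by (rule nn_integral_cmult_indicator)
    finally show ?thesis .
  qed
  have meas_bd: "emeasure lborel (E \<inter> {u. \<rho> - cmod u \<le> \<tau>}) \<le> ennreal (4*l\<^sup>2)" for \<tau>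
    by (rule box_sq_measure[where c=\<zeta>])
      (use l in \<open>auto simp: E_def dist_commute dist_norm intro: abs_Re_le_cmod[of "_ - \<zeta>", THEN order.strict_trans1, simplified] abs_Im_le_cmod[of "_ - \<zeta>", THEN order.strict_trans1, simplified]\<close>)
  have meas_bd2: "emeasure lborel (E \<inter> {u. \<rho> - cmod u \<le> \<tau>}) \<le> ennreal (600*l*\<tau>)" if t: "\<tau> > 0" for \<tau>
  proof -
    have "E \<inter> {u. \<rho> - cmod u \<le> \<tau>} \<subseteq> {u. dist u \<zeta> < l \<and> \<rho> - (2*\<tau>) < cmod u \<and> cmod u < \<rho>}"
      using t by (auto simp: E_def dist_commute)
    then have "emeasure lborel (E \<inter> {u. \<rho> - cmod u \<le> \<tau>}) \<le> emeasure lborel {u. dist u \<zeta> < l \<and> \<rho> - (2*\<tau>) < cmod u \<and> cmod u < \<rho>}"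
      by (rule emeasure_mono) (simp add: borel_open[OF open_annball])
    also have "\<dots> \<le> ennreal (300 * l * (2*\<tau>))"
      by (rule annulus_ball) (use r t l in auto)
    also have "300 * l * (2*\<tau>) = 600*l*\<tau>" by simp
    finally show ?thesis .
  qed
  have empty: "E \<inter> {u. \<rho> - cmod u \<le> \<tau>} = {}" if "\<tau> \<le> 0" for \<tau>
    using that by (auto simp: E_def)
  have step4: "(\<integral>\<^sup>+u. F (u,\<tau>) \<partial>lborel) \<le> ennreal (-s*600*l) * (ennreal (\<tau> powr s) * indicator {0..l} \<tau>)
                   + ennreal (-s*4*l\<^sup>2) * (ennreal (\<tau> powr (s-1)) * indicator {l..} \<tau>)" for \<tau>
  proof (cases "\<tau> > 0")
    case False
    then show ?thesis using empty[of \<tau>] by (simp add: step3)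
  next
    case True
    show ?thesis
    proof (cases "\<tau> \<le> l")
      case True2: True
      have "(\<integral>\<^sup>+u. F (u,\<tau>) \<partial>lborel) \<le> ennreal (-s * \<tau> powr (s-1)) * ennreal (600*l*\<tau>)"
        unfolding step3 by (intro mult_left_mono meas_bd2 True) simp
      also have "\<dots> = ennreal (-s * \<tau> powr (s-1) * (600*l*\<tau>))"
        by (rule ennreal_mult[symmetric]) (use s0 l True in \<open>auto simp: mult_nonpos_nonneg\<close>)
      also have "-s * \<tau> powr (s-1) * (600*l*\<tau>) = (-s*600*l) * (\<tau> powr (s-1) * \<tau>)" by simp
      also have "\<tau> powr (s-1) * \<tau> = \<tau> powr s"
        using True by (simp add: powr_diff)
      also have "ennreal (-s*600*l * \<tau> powr s) = ennreal (-s*600*l) * (ennreal (\<tau> powr s) * indicator {0..l} \<tau>)"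
        using True True2 s0 l by (subst ennreal_mult) (auto simp: mult_nonpos_nonneg)
      finally show ?thesis by (rule order_trans) simp
    next
      case False2: False
      have "(\<integral>\<^sup>+u. F (u,\<tau>) \<partial>lborel) \<le> ennreal (-s * \<tau> powr (s-1)) * ennreal (4*l\<^sup>2)"
        unfolding step3 by (intro mult_left_mono meas_bd) simp
      also have "\<dots> = ennreal (-s*4*l\<^sup>2) * (ennreal (\<tau> powr (s-1)) * indicator {l..} \<tau>)"
      proof -
        have "ennreal (-s * \<tau> powr (s-1)) * ennreal (4*l\<^sup>2) = ennreal (-s * \<tau> powr (s-1) * (4*l\<^sup>2))"
          by (rule ennreal_mult[symmetric]) (use s0 in \<open>auto simp: mult_nonpos_nonneg\<close>)
        also have "\<dots> = ennreal ((-s*4*l\<^sup>2) * \<tau> powr (s-1))"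
          by (intro arg_cong[where f=ennreal]) (simp add: algebra_simps)
        also have "\<dots> = ennreal (-s*4*l\<^sup>2) * ennreal (\<tau> powr (s-1))"
          by (rule ennreal_mult) (use s0 in \<open>auto simp: mult_nonpos_nonneg\<close>)
        finally show ?thesis using False2 by simp
      qed
      finally show ?thesis by (rule order_trans) simp
    qed
  qed
  have "(\<integral>\<^sup>+u. indicator E u * ennreal ((\<rho> - cmod u) powr s) \<partial>lborel)
     = (\<integral>\<^sup>+\<tau>. \<integral>\<^sup>+u. F (u,\<tau>) \<partial>lborel \<partial>lborel)" using step1 step2 by simp
  also have "\<dots> \<le> (\<integral>\<^sup>+\<tau>. ennreal (-s*600*l) * (ennreal (\<tau> powr s) * indicator {0..l} \<tau>)
                   + ennreal (-s*4*l\<^sup>2) * (ennreal (\<tau> powr (s-1)) * indicator {l..} \<tau>) \<partial>lborel)"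
    by (rule nn_integral_mono) (rule step4)
  also have "\<dots> = ennreal (-s*600*l) * (\<integral>\<^sup>+\<tau>. ennreal (\<tau> powr s) * indicator {0..l} \<tau> \<partial>lborel)
                 + ennreal (-s*4*l\<^sup>2) * (\<integral>\<^sup>+\<tau>. ennreal (\<tau> powr (s-1)) * indicator {l..} \<tau> \<partial>lborel)"
    by (subst nn_integral_add) (auto simp: nn_integral_cmult)
  also have "\<dots> = ennreal (-s*600*l) * ennreal (l powr (s+1) / (s+1))
                 + ennreal (-s*4*l\<^sup>2) * ennreal (l powr (s - 1 + 1) / (-(s - 1 + 1)))"
    by (subst nn_powr_from_0, use l s1 in simp, use l s1 in simp, subst nn_powr_to_inf, use l s0 in simp, use l s0 in simp, simp)
  also have "\<dots> = ennreal (-s*600*l * (l powr (s+1) / (s+1)) + (-s*4*l\<^sup>2) * (l powr (s - 1 + 1) / (-(s - 1 + 1))))"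
    by (rule ennreal_abcd) (use s0 s1 l in \<open>auto simp: mult_nonpos_nonneg divide_nonneg_neg\<close>)
  also have "-s*600*l * (l powr (s+1) / (s+1)) + (-s*4*l\<^sup>2) * (l powr (s - 1 + 1) / (-(s - 1 + 1)))
       = (600 * (-s)/(s+1) + 4) * l powr (s+2)"
  proof -
    have "l powr (s+2) = l powr (1 + (s+1))" by (simp add: algebra_simps)
    also have "\<dots> = l powr 1 * l powr (s+1)" by (rule powr_add)
    also have "\<dots> = l * l powr (s+1)" using l by simp
    finally have A: "l * l powr (s+1) = l powr (s+2)" by simp
    have "l powr (s+2) = l powr (2 + s)" by (simp add: algebra_simps)
    also have "\<dots> = l powr 2 * l powr s" by (rule powr_add)
    also have "\<dots> = l\<^sup>2 * l powr s" using l by (simp add: powr_realpow)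
    finally have B: "l\<^sup>2 * l powr s = l powr (s+2)" by simp
    show ?thesis using s0 s1 A B by (simp add: field_simps)
  qed
  finally show ?thesis unfolding E_def .
qed

definition KM :: "real \<Rightarrow> real" where
  "KM s = (if s < 0 then 600 * (-s)/(s+1) + 4 else 4 * 2 powr s)"

lemma KM_pos: assumes "s > -1" shows "KM s > 0"
proof (cases "s < 0")
  case True
  have "600 * s / (s + 1) < 0" using True assms by (intro divide_neg_pos) auto
  then show ?thesis using True by (simp add: KM_def)
qed (simp add: KM_def)

lemma weight_ball:
  fixes s \<rho> l :: real and \<zeta> :: complex
  assumes s1: "-1 < s" and r: "0 < \<rho>" "\<rho> \<le> 1" and l: "l > 0" and z: "cmod \<zeta> \<ge> \<rho>"
  shows "(\<integral>\<^sup>+u. indicator (ball 0 \<rho> \<inter> ball \<zeta> l) u * ennreal ((\<rho>\<^sup>2 - (cmod u)\<^sup>2) powr s) \<partial>lborel)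
          \<le> ennreal (KM s * \<rho> powr (min s 0) * l powr (s+2))"
proof (cases "s < 0")
  case True
  have "(\<integral>\<^sup>+u. indicator (ball 0 \<rho> \<inter> ball \<zeta> l) u * ennreal ((\<rho>\<^sup>2 - (cmod u)\<^sup>2) powr s) \<partial>lborel)
     \<le> (\<integral>\<^sup>+u. ennreal (\<rho> powr s) * (indicator (ball 0 \<rho> \<inter> ball \<zeta> l) u * ennreal ((\<rho> - cmod u) powr s)) \<partial>lborel)"
  proof (intro nn_integral_mono)
    fix u :: complex
    show "indicator (ball 0 \<rho> \<inter> ball \<zeta> l) u * ennreal ((\<rho>\<^sup>2 - (cmod u)\<^sup>2) powr s)
        \<le> ennreal (\<rho> powr s) * (indicator (ball 0 \<rho> \<inter> ball \<zeta> l) u * ennreal ((\<rho> - cmod u) powr s))"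
    proof (cases "u \<in> ball 0 \<rho>")
      case False then show ?thesis by simp
    next
      case uin: True
      then have p1: "\<rho> - cmod u > 0" by simp
      have p2: "\<rho> + cmod u \<ge> \<rho>" by simp
      have "(\<rho>\<^sup>2 - (cmod u)\<^sup>2) powr s = ((\<rho> - cmod u) * (\<rho> + cmod u)) powr s"
        by (simp add: power2_eq_square algebra_simps)
      also have "\<dots> = (\<rho> - cmod u) powr s * (\<rho> + cmod u) powr s"
        using p1 r by (simp add: powr_mult)
      also have "\<dots> \<le> (\<rho> - cmod u) powr s * \<rho> powr s"
        using p1 r True by (intro mult_left_mono powr_mono2') auto
      finally have le: "(\<rho>\<^sup>2 - (cmod u)\<^sup>2) powr s \<le> \<rho> powr s * (\<rho> - cmod u) powr s" by (simp add: mult.commute)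
      show ?thesis
      proof (cases "u \<in> ball \<zeta> l")
        case True
        have "ennreal ((\<rho>\<^sup>2 - (cmod u)\<^sup>2) powr s) \<le> ennreal (\<rho> powr s * (\<rho> - cmod u) powr s)"
          using le by (rule ennreal_leI)
        also have "\<dots> = ennreal (\<rho> powr s) * ennreal ((\<rho> - cmod u) powr s)" by (rule ennreal_mult) auto
        finally show ?thesis using True uin by simp
      qed simp
    qed
  qed
  also have "\<dots> = ennreal (\<rho> powr s) * (\<integral>\<^sup>+u. indicator (ball 0 \<rho> \<inter> ball \<zeta> l) u * ennreal ((\<rho> - cmod u) powr s) \<partial>lborel)"
    by (rule nn_integral_cmult) (rule meas_ind, simp, measurable)
  also have "\<dots> \<le> ennreal (\<rho> powr s) * ennreal ((600 * (-s)/(s+1) + 4) * l powr (s+2))"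
    by (intro mult_left_mono weight_neg) (use s1 True r l in auto)
  also have "\<dots> = ennreal (\<rho> powr s * ((600 * (-s)/(s+1) + 4) * l powr (s+2)))"
  proof (rule ennreal_mult[symmetric])
    have "600 * (-s)/(s+1) \<ge> 0" using True s1 by (intro divide_nonneg_pos) auto
    then show "0 \<le> (600 * (-s)/(s+1) + 4) * l powr (s+2)" by simp
  qed simp
  also have "\<dots> = ennreal (KM s * \<rho> powr (min s 0) * l powr (s+2))"
    using True by (simp add: KM_def mult_ac)
  finally show ?thesis .
next
  case False
  have "(\<integral>\<^sup>+u. indicator (ball 0 \<rho> \<inter> ball \<zeta> l) u * ennreal ((\<rho>\<^sup>2 - (cmod u)\<^sup>2) powr s) \<partial>lborel)
     \<le> (\<integral>\<^sup>+u. ennreal ((2*l) powr s) * indicator (ball \<zeta> l) u \<partial>lborel)"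
  proof (intro nn_integral_mono)
    fix u :: complex
    show "indicator (ball 0 \<rho> \<inter> ball \<zeta> l) u * ennreal ((\<rho>\<^sup>2 - (cmod u)\<^sup>2) powr s)
        \<le> ennreal ((2*l) powr s) * indicator (ball \<zeta> l) u"
    proof (cases "u \<in> ball 0 \<rho> \<inter> ball \<zeta> l")
      case False then show ?thesis by (auto simp: indicator_def)
    next
      case uin: True
      then have p1: "\<rho> - cmod u > 0" and du: "dist \<zeta> u < l" by auto
      have "\<rho> - cmod u \<le> cmod \<zeta> - cmod u" using z by simp
      also have "\<dots> \<le> dist \<zeta> u" by (simp add: dist_norm norm_triangle_ineq2)
      finally have a: "\<rho> - cmod u \<le> l" using du by simp
      have b: "\<rho> + cmod u \<le> 2" using p1 r by simp
      have "\<rho>\<^sup>2 - (cmod u)\<^sup>2 = (\<rho> - cmod u) * (\<rho> + cmod u)"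
        by (simp add: power2_eq_square algebra_simps)
      also have "\<dots> \<le> l * 2" using a b p1 r by (intro mult_mono) auto
      finally have c: "\<rho>\<^sup>2 - (cmod u)\<^sup>2 \<le> 2*l" by simp
      have "(\<rho>\<^sup>2 - (cmod u)\<^sup>2) powr s \<le> (2*l) powr s"
        using c p1 False power_mono[of "cmod u" \<rho> 2] by (intro powr_mono2) auto
      then show ?thesis using uin by (auto intro!: ennreal_leI)
    qed
  qed
  also have "\<dots> = ennreal ((2*l) powr s) * emeasure lborel (ball \<zeta> l)"
    by (rule nn_integral_cmult_indicator) simp
  also have "\<dots> \<le> ennreal ((2*l) powr s) * ennreal (4*l\<^sup>2)"
    by (intro mult_left_mono box_sq_measure[where c=\<zeta>])
      (use l in \<open>auto simp: dist_commute dist_norm intro: abs_Re_le_cmod[of "_ - \<zeta>", THEN order.strict_trans1, simplified] abs_Im_le_cmod[of "_ - \<zeta>", THEN order.strict_trans1, simplified]\<close>)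
  also have "\<dots> = ennreal (KM s * \<rho> powr (min s 0) * l powr (s+2))"
  proof -
    have "(2*l) powr s * (4*l\<^sup>2) = 4 * 2 powr s * (l powr s * l\<^sup>2)"
      using l by (simp add: powr_mult)
    also have "l powr s * l\<^sup>2 = l powr (s+2)"
      using l by (simp add: powr_add powr_realpow)
    finally have "(2*l) powr s * (4*l\<^sup>2) = KM s * \<rho> powr (min s 0) * l powr (s+2)"
      using False r by (simp add: KM_def)
    then show ?thesis using l by (simp add: ennreal_mult[symmetric])
  qed
  finally show ?thesis .
qed

lemma rho_pow_le1:
  fixes \<rho> s :: real
  assumes r: "0 < \<rho>" "\<rho> \<le> 1" and s1: "-1 < s"
  shows "\<rho> powr (min s 0) * \<rho> powr (s+2) \<le> 1"
proof -
  have "\<rho> powr (min s 0) * \<rho> powr (s+2) = \<rho> powr (min s 0 + (s+2))" by (simp add: powr_add)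
  also have "\<dots> \<le> 1" using r s1 by (intro powr_le1) auto
  finally show ?thesis .
qed

lemma fiber_small:
  fixes s \<beta> \<rho> :: real and c :: complex
  assumes s1: "-1 < s" and bs: "s + 2 < \<beta>" and r: "0 < \<rho>" "\<rho> \<le> 1" and c: "cmod c * \<rho> < 1/2"
  shows "(\<integral>\<^sup>+u. indicator (ball 0 \<rho>) u * ennreal ((\<rho>\<^sup>2 - (cmod u)\<^sup>2) powr s / (cmod (1 - c*u)) powr \<beta>) \<partial>lborel)
     \<le> ennreal (2 powr \<beta> * KM s * 2 powr (s+2))"
proof -
  have "(\<integral>\<^sup>+u. indicator (ball 0 \<rho>) u * ennreal ((\<rho>\<^sup>2 - (cmod u)\<^sup>2) powr s / (cmod (1 - c*u)) powr \<beta>) \<partial>lborel)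
     \<le> (\<integral>\<^sup>+u. ennreal (2 powr \<beta>) * (indicator (ball 0 \<rho> \<inter> ball (complex_of_real \<rho>) (2*\<rho>)) u * ennreal ((\<rho>\<^sup>2 - (cmod u)\<^sup>2) powr s)) \<partial>lborel)"
  proof (intro nn_integral_mono)
    fix u :: complex
    show "indicator (ball 0 \<rho>) u * ennreal ((\<rho>\<^sup>2 - (cmod u)\<^sup>2) powr s / (cmod (1 - c*u)) powr \<beta>)
       \<le> ennreal (2 powr \<beta>) * (indicator (ball 0 \<rho> \<inter> ball (complex_of_real \<rho>) (2*\<rho>)) u * ennreal ((\<rho>\<^sup>2 - (cmod u)\<^sup>2) powr s))"
    proof (cases "u \<in> ball 0 \<rho>")
      case False then show ?thesis by simp
    next
      case True
      have u2: "u \<in> ball (complex_of_real \<rho>) (2*\<rho>)"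
      proof -
        have "dist (complex_of_real \<rho>) u \<le> cmod (complex_of_real \<rho>) + cmod u"
          unfolding dist_norm by (rule norm_triangle_ineq4)
        then show ?thesis using True r by auto
      qed
      have "cmod (c*u) \<le> cmod c * \<rho>"
        using True by (simp add: norm_mult mult_left_mono)
      then have "cmod (c*u) < 1/2" using c by simp
      moreover have "1 - cmod (c*u) \<le> cmod (1 - c*u)"
        using norm_triangle_ineq2[of 1 "c*u"] by simp
      ultimately have X: "1/2 \<le> cmod (1 - c*u)" by simp
      have "(1/2) powr \<beta> \<le> cmod (1 - c*u) powr \<beta>"
        using X bs s1 by (intro powr_mono2) auto
      moreover have "(1/2::real) powr \<beta> = 1 / 2 powr \<beta>" by (simp add: powr_divide)
      ultimately have Y: "1 / 2 powr \<beta> \<le> cmod (1 - c*u) powr \<beta>" by simp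
      have W: "(\<rho>\<^sup>2 - (cmod u)\<^sup>2) powr s \<ge> 0" by simp
      have "(\<rho>\<^sup>2 - (cmod u)\<^sup>2) powr s / (cmod (1 - c*u)) powr \<beta> \<le> (\<rho>\<^sup>2 - (cmod u)\<^sup>2) powr s / (1 / 2 powr \<beta>)"
      proof (rule divide_left_mono)
        have pos: "0 < 1 / 2 powr \<beta>" by simp
        then have Xp: "0 < cmod (1 - c*u) powr \<beta>" using Y by linarith
        show "0 < cmod (1 - c*u) powr \<beta> * (1 / 2 powr \<beta>)" using Xp pos by (rule mult_pos_pos)
      qed (use Y W in auto)
      also have "\<dots> = 2 powr \<beta> * (\<rho>\<^sup>2 - (cmod u)\<^sup>2) powr s" by simp
      finally have Z: "(\<rho>\<^sup>2 - (cmod u)\<^sup>2) powr s / (cmod (1 - c*u)) powr \<beta> \<le> 2 powr \<beta> * (\<rho>\<^sup>2 - (cmod u)\<^sup>2) powr s" .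
      have "ennreal ((\<rho>\<^sup>2 - (cmod u)\<^sup>2) powr s / (cmod (1 - c*u)) powr \<beta>) \<le> ennreal (2 powr \<beta> * (\<rho>\<^sup>2 - (cmod u)\<^sup>2) powr s)"
        using Z by (rule ennreal_leI)
      also have "\<dots> = ennreal (2 powr \<beta>) * ennreal ((\<rho>\<^sup>2 - (cmod u)\<^sup>2) powr s)" by (rule ennreal_mult) auto
      finally show ?thesis using True u2 by simp
    qed
  qed
  also have "\<dots> = ennreal (2 powr \<beta>) * (\<integral>\<^sup>+u. indicator (ball 0 \<rho> \<inter> ball (complex_of_real \<rho>) (2*\<rho>)) u * ennreal ((\<rho>\<^sup>2 - (cmod u)\<^sup>2) powr s) \<partial>lborel)"
    by (rule nn_integral_cmult) (rule meas_ind, simp, measurable)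
  also have "\<dots> \<le> ennreal (2 powr \<beta>) * ennreal (KM s * \<rho> powr (min s 0) * (2*\<rho>) powr (s+2))"
    by (intro mult_left_mono weight_ball) (use s1 r in auto)
  also have "\<dots> \<le> ennreal (2 powr \<beta>) * ennreal (KM s * 2 powr (s+2))"
  proof (intro mult_left_mono ennreal_leI)
    have "KM s * \<rho> powr (min s 0) * (2*\<rho>) powr (s+2) = KM s * 2 powr (s+2) * (\<rho> powr (min s 0) * \<rho> powr (s+2))"
      using r by (simp add: powr_mult)
    also have "\<dots> \<le> KM s * 2 powr (s+2) * 1"
      using rho_pow_le1[OF r s1] KM_pos[OF s1] by (intro mult_left_mono) auto
    finally show "KM s * \<rho> powr (min s 0) * (2*\<rho>) powr (s+2) \<le> KM s * 2 powr (s+2)" by simp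
  qed simp
  also have "\<dots> = ennreal (2 powr \<beta> * KM s * 2 powr (s+2))"
    using KM_pos[OF s1] by (simp add: ennreal_mult[symmetric] mult.assoc)
  finally show ?thesis .
qed

lemma fiber_big_real:
  fixes s \<beta> \<rho> a \<delta> :: real
  assumes s1: "-1 < s" and bs: "s + 2 < \<beta>" and r: "0 < \<rho>" "\<rho> \<le> 1" and a1: "1/2 \<le> a * \<rho>" and a2: "a * \<rho> < 1"
    and d: "\<delta> = 1 - a * \<rho>"
  shows "\<beta> * KM s * \<rho> powr (min s 0) * (2/a) powr (s+2) * (\<delta> powr (s + 1 - \<beta> + 1) / (-(s + 1 - \<beta> + 1)))
     \<le> \<beta> * KM s * 4 powr (s+2) * 2 powr (\<beta>-s-2) / (\<beta>-s-2) * (1 / (1 - a\<^sup>2 * \<rho>\<^sup>2) powr (\<beta>-s-2))"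
proof -
  define b where "b = \<beta> - s - 2"
  have b: "b > 0" using bs by (simp add: b_def)
  have "0 < a * \<rho>" using a1 by linarith
  then have a: "a > 0" using r by (simp add: zero_less_mult_iff)
  have dp: "\<delta> > 0" using d a2 by simp
  have K: "KM s > 0" by (rule KM_pos[OF s1])
  have Q: "\<rho> powr (min s 0) * (2/a) powr (s+2) \<le> 4 powr (s+2)"
  proof -
    have "2/a \<le> 4*\<rho>" using a a1 by (simp add: field_simps)
    then have "(2/a) powr (s+2) \<le> (4*\<rho>) powr (s+2)" using a s1 by (intro powr_mono2) auto
    also have "\<dots> = 4 powr (s+2) * \<rho> powr (s+2)" using r by (simp add: powr_mult)
    finally have "\<rho> powr (min s 0) * (2/a) powr (s+2) \<le> \<rho> powr (min s 0) * (4 powr (s+2) * \<rho> powr (s+2))"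
      by (intro mult_left_mono) auto
    also have "\<dots> = 4 powr (s+2) * (\<rho> powr (min s 0) * \<rho> powr (s+2))" by simp
    also have "\<dots> \<le> 4 powr (s+2) * 1"
      by (intro mult_left_mono rho_pow_le1[OF r s1]) auto
    finally show ?thesis by simp
  qed
  have D: "\<delta> powr (s + 1 - \<beta> + 1) \<le> 2 powr b * (1 / (1 - a\<^sup>2 * \<rho>\<^sup>2) powr b)"
  proof -
    have e: "s + 1 - \<beta> + 1 = -b" by (simp add: b_def)
    have pos: "1 - a\<^sup>2 * \<rho>\<^sup>2 > 0"
    proof -
      have "(a*\<rho>)\<^sup>2 < 1\<^sup>2" using a2 a r by (intro power_strict_mono) auto
      then show ?thesis by (simp add: power_mult_distrib)
    qed
    have le: "1 - a\<^sup>2 * \<rho>\<^sup>2 \<le> 2 * \<delta>"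
    proof -
      have "1 - a\<^sup>2 * \<rho>\<^sup>2 = (1 - a*\<rho>) * (1 + a*\<rho>)" by (simp add: power2_eq_square algebra_simps)
      also have "\<dots> \<le> (1 - a*\<rho>) * 2" using a2 by (intro mult_left_mono) auto
      finally show ?thesis using d by simp
    qed
    have "(1 - a\<^sup>2 * \<rho>\<^sup>2) powr b \<le> (2 * \<delta>) powr b" using le pos b by (intro powr_mono2) auto
    also have "\<dots> = 2 powr b * \<delta> powr b" using dp by (simp add: powr_mult)
    finally have X: "(1 - a\<^sup>2 * \<rho>\<^sup>2) powr b \<le> 2 powr b * \<delta> powr b" .
    have "\<delta> powr (s + 1 - \<beta> + 1) = 1 / \<delta> powr b" unfolding e by (simp add: powr_minus_divide)
    also have "\<dots> \<le> 2 powr b / (1 - a\<^sup>2 * \<rho>\<^sup>2) powr b"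
      using X pos dp by (simp add: field_simps)
    finally show ?thesis by simp
  qed
  have "\<beta> * KM s * \<rho> powr (min s 0) * (2/a) powr (s+2) * (\<delta> powr (s + 1 - \<beta> + 1) / (-(s + 1 - \<beta> + 1)))
      = (\<beta> * KM s / b) * (\<rho> powr (min s 0) * (2/a) powr (s+2)) * \<delta> powr (s + 1 - \<beta> + 1)"
  proof -
    have "-(s + 1 - \<beta> + 1) = b" by (simp add: b_def)
    then show ?thesis using b by (simp add: divide_simps mult_ac)
  qed
  also have "\<dots> \<le> (\<beta> * KM s / b) * 4 powr (s+2) * (2 powr b * (1 / (1 - a\<^sup>2 * \<rho>\<^sup>2) powr b))"
    using Q D K b bs s1 by (intro mult_mono) auto
  also have "\<dots> = \<beta> * KM s * 4 powr (s+2) * 2 powr (\<beta>-s-2) / (\<beta>-s-2) * (1 / (1 - a\<^sup>2 * \<rho>\<^sup>2) powr (\<beta>-s-2))"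
    by (simp add: b_def)
  finally show ?thesis .
qed

lemma fiber_big:
  fixes s \<beta> \<rho> :: real and c :: complex
  assumes s1: "-1 < s" and bs: "s + 2 < \<beta>" and r: "0 < \<rho>" "\<rho> \<le> 1"
    and c1: "1/2 \<le> cmod c * \<rho>" and c2: "cmod c * \<rho> < 1"
  shows "(\<integral>\<^sup>+u. indicator (ball 0 \<rho>) u * ennreal ((\<rho>\<^sup>2 - (cmod u)\<^sup>2) powr s / (cmod (1 - c*u)) powr \<beta>) \<partial>lborel)
     \<le> ennreal (\<beta> * KM s * 4 powr (s+2) * 2 powr (\<beta>-s-2) / (\<beta>-s-2) * (1 / (1 - (cmod c)\<^sup>2 * \<rho>\<^sup>2) powr (\<beta>-s-2)))"
proof -
  define a where "a = cmod c"
  define \<delta> where "\<delta> = 1 - a * \<rho>"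
  define W where "W = (\<lambda>u::complex. (\<rho>\<^sup>2 - (cmod u)\<^sup>2) powr s)"
  define \<zeta> where "\<zeta> = 1 / c"
  have "0 < a * \<rho>" using c1 unfolding a_def by linarith
  then have a: "a > 0" using r by (simp add: zero_less_mult_iff)
  then have c0: "c \<noteq> 0" unfolding a_def by auto
  have dp: "\<delta> > 0" using c2 unfolding \<delta>_def a_def by simp
  have bp: "\<beta> > 0" using bs s1 by simp
  have K: "KM s > 0" by (rule KM_pos[OF s1])
  have k1: "cmod (1 - c*u) > \<delta>" if "u \<in> ball 0 \<rho>" for u
  proof -
    have "cmod (c*u) = a * cmod u" by (simp add: a_def norm_mult)
    also have "\<dots> < a * \<rho>" using that a by simp
    finally have "cmod (c*u) < a*\<rho>" .
    moreover have "1 - cmod (c*u) \<le> cmod (1 - c*u)"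
      using norm_triangle_ineq2[of 1 "c*u"] by simp
    ultimately show ?thesis unfolding \<delta>_def by simp
  qed
  have k2: "u \<in> ball \<zeta> (2*\<tau>/a)" if "cmod (1 - c*u) \<le> \<tau>" "\<tau> > 0" for u \<tau>
  proof -
    have "\<zeta> - u = (1 - c*u) / c" using c0 by (simp add: \<zeta>_def field_simps)
    then have "dist \<zeta> u = cmod (1 - c*u) / a" by (simp add: dist_norm norm_divide a_def)
    also have "\<dots> \<le> \<tau> / a" using that a by (simp add: divide_right_mono)
    also have "\<dots> < 2*\<tau>/a" using that a by (simp add: divide_strict_right_mono)
    finally show ?thesis by simp
  qed
  have k3: "cmod \<zeta> \<ge> \<rho>"
  proof -
    have "cmod \<zeta> = 1 / a" by (simp add: \<zeta>_def a_def norm_divide)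
    moreover have "\<rho> \<le> 1 / a" using c2 a by (simp add: a_def field_simps)
    ultimately show ?thesis by simp
  qed
  define G where "G = (\<lambda>p::complex \<times> real. indicator (ball 0 \<rho>) (fst p) * ennreal (W (fst p)) *
      (ennreal (\<beta> * snd p powr (-\<beta> - 1)) * indicator {p. cmod (1 - c * fst p) \<le> snd p} p))"
  have Gm: "G \<in> borel_measurable (lborel \<Otimes>\<^sub>M lborel)"
  proof -
    have cl: "closed {p::complex \<times> real. cmod (1 - c * fst p) \<le> snd p}"
      by (intro closed_Collect_le continuous_intros)
    have S1[measurable]: "{p::complex \<times> real. cmod (1 - c * fst p) \<le> snd p} \<in> sets (lborel \<Otimes>\<^sub>M lborel)"
    proof -
      have "sets (lborel \<Otimes>\<^sub>M lborel) = sets (borel :: (complex \<times> real) measure)"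
        by (simp only: lborel_prod sets_lborel)
      then show ?thesis using borel_closed[OF cl] by simp
    qed
    have [measurable]: "ball (0::complex) \<rho> \<in> sets borel" by simp
    show ?thesis
      unfolding G_def W_def by measurable
  qed
  have step1: "(\<integral>\<^sup>+u. indicator (ball 0 \<rho>) u * ennreal ((\<rho>\<^sup>2 - (cmod u)\<^sup>2) powr s / (cmod (1 - c*u)) powr \<beta>) \<partial>lborel)
       = (\<integral>\<^sup>+u. \<integral>\<^sup>+\<tau>. G (u,\<tau>) \<partial>lborel \<partial>lborel)"
  proof (intro nn_integral_cong)
    fix u :: complex
    show "indicator (ball 0 \<rho>) u * ennreal ((\<rho>\<^sup>2 - (cmod u)\<^sup>2) powr s / (cmod (1 - c*u)) powr \<beta>) = (\<integral>\<^sup>+\<tau>. G (u,\<tau>) \<partial>lborel)"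
    proof (cases "u \<in> ball 0 \<rho>")
      case False then show ?thesis by (simp add: G_def)
    next
      case True
      define X where "X = cmod (1 - c*u)"
      have Xp: "X > 0" using k1[OF True] dp unfolding X_def by linarith
      have "(\<integral>\<^sup>+\<tau>. G (u,\<tau>) \<partial>lborel) = (\<integral>\<^sup>+\<tau>. ennreal (W u) * (ennreal (\<beta> * \<tau> powr (-\<beta> - 1)) * indicator {X..} \<tau>) \<partial>lborel)"
        using True by (intro nn_integral_cong) (auto simp: G_def X_def indicator_def)
      also have "\<dots> = ennreal (W u) * (\<integral>\<^sup>+\<tau>. ennreal (\<beta> * \<tau> powr (-\<beta> - 1)) * indicator {X..} \<tau> \<partial>lborel)"
        by (rule nn_integral_cmult) measurable
      also have "(\<integral>\<^sup>+\<tau>. ennreal (\<beta> * \<tau> powr (-\<beta> - 1)) * indicator {X..} \<tau> \<partial>lborel) = ennreal (X powr (-\<beta>))"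
        using layer_powr_neg[of X "-\<beta>"] Xp bp by simp
      also have "ennreal (W u) * ennreal (X powr (-\<beta>)) = ennreal (W u * X powr (-\<beta>))"
        by (rule ennreal_mult[symmetric]) (auto simp: W_def)
      also have "W u * X powr (-\<beta>) = (\<rho>\<^sup>2 - (cmod u)\<^sup>2) powr s / (cmod (1 - c*u)) powr \<beta>"
        by (simp add: W_def X_def powr_minus_divide)
      finally show ?thesis using True by simp
    qed
  qed
  have step2: "(\<integral>\<^sup>+u. \<integral>\<^sup>+\<tau>. G (u,\<tau>) \<partial>lborel \<partial>lborel) = (\<integral>\<^sup>+\<tau>. \<integral>\<^sup>+u. G (u,\<tau>) \<partial>lborel \<partial>lborel)"
    by (rule pair_sigma_finite.Fubini'[symmetric])
       (use Gm in \<open>auto simp: pair_sigma_finite_def lborel.sigma_finite_measure_axioms\<close>)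
  define Q where "Q = \<beta> * KM s * \<rho> powr (min s 0) * (2/a) powr (s+2)"
  have Qp: "Q \<ge> 0" unfolding Q_def using bp K by simp
  have step3: "(\<integral>\<^sup>+u. G (u,\<tau>) \<partial>lborel) \<le> ennreal Q * (ennreal (\<tau> powr (s + 1 - \<beta>)) * indicator {\<delta>..} \<tau>)" for \<tau>
  proof -
    have "(\<integral>\<^sup>+u. G (u,\<tau>) \<partial>lborel) = (\<integral>\<^sup>+u. ennreal (\<beta> * \<tau> powr (-\<beta> - 1)) * (indicator (ball 0 \<rho> \<inter> {u. cmod (1 - c*u) \<le> \<tau>}) u * ennreal (W u)) \<partial>lborel)"
      by (intro nn_integral_cong) (auto simp: G_def indicator_def mult.commute)
    also have "\<dots> = ennreal (\<beta> * \<tau> powr (-\<beta> - 1)) * (\<integral>\<^sup>+u. indicator (ball 0 \<rho> \<inter> {u. cmod (1 - c*u) \<le> \<tau>}) u * ennreal (W u) \<partial>lborel)"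
    proof (rule nn_integral_cmult, rule meas_ind)
      have "closed {u. cmod (1 - c*u) \<le> \<tau>}" by (intro closed_Collect_le continuous_intros)
      then show "ball 0 \<rho> \<inter> {u. cmod (1 - c*u) \<le> \<tau>} \<in> sets borel" by simp
    qed (unfold W_def, measurable)
    also have "\<dots> \<le> ennreal Q * (ennreal (\<tau> powr (s + 1 - \<beta>)) * indicator {\<delta>..} \<tau>)"
    proof (cases "\<tau> < \<delta>")
      case True
      have "ball 0 \<rho> \<inter> {u. cmod (1 - c*u) \<le> \<tau>} = {}"
        using k1 True by force
      then show ?thesis by simp
    next
      case False
      then have tp: "\<tau> > 0" using dp by simp
      have "(\<integral>\<^sup>+u. indicator (ball 0 \<rho> \<inter> {u. cmod (1 - c*u) \<le> \<tau>}) u * ennreal (W u) \<partial>lborel)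
          \<le> (\<integral>\<^sup>+u. indicator (ball 0 \<rho> \<inter> ball \<zeta> (2*\<tau>/a)) u * ennreal ((\<rho>\<^sup>2 - (cmod u)\<^sup>2) powr s) \<partial>lborel)"
        by (intro nn_integral_mono) (auto simp: indicator_def W_def dest: k2[OF _ tp])
      also have "\<dots> \<le> ennreal (KM s * \<rho> powr (min s 0) * (2*\<tau>/a) powr (s+2))"
        by (rule weight_ball) (use s1 r tp a k3 in auto)
      finally have I: "(\<integral>\<^sup>+u. indicator (ball 0 \<rho> \<inter> {u. cmod (1 - c*u) \<le> \<tau>}) u * ennreal (W u) \<partial>lborel)
          \<le> ennreal (KM s * \<rho> powr (min s 0) * (2*\<tau>/a) powr (s+2))" .
      have "ennreal (\<beta> * \<tau> powr (-\<beta> - 1)) * (\<integral>\<^sup>+u. indicator (ball 0 \<rho> \<inter> {u. cmod (1 - c*u) \<le> \<tau>}) u * ennreal (W u) \<partial>lborel)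
          \<le> ennreal (\<beta> * \<tau> powr (-\<beta> - 1)) * ennreal (KM s * \<rho> powr (min s 0) * (2*\<tau>/a) powr (s+2))"
        by (intro mult_left_mono I) simp
      also have "\<dots> = ennreal (\<beta> * \<tau> powr (-\<beta> - 1) * (KM s * \<rho> powr (min s 0) * (2*\<tau>/a) powr (s+2)))"
        by (rule ennreal_mult[symmetric]) (use bp K in auto)
      also have "\<beta> * \<tau> powr (-\<beta> - 1) * (KM s * \<rho> powr (min s 0) * (2*\<tau>/a) powr (s+2)) = Q * \<tau> powr (s + 1 - \<beta>)"
      proof -
        have "(2*\<tau>/a) powr (s+2) = (2/a) powr (s+2) * \<tau> powr (s+2)"
          using tp a by (simp add: powr_mult[symmetric])
        moreover have "\<tau> powr (-\<beta> - 1) * \<tau> powr (s+2) = \<tau> powr (s + 1 - \<beta>)"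
          by (simp add: powr_add[symmetric] algebra_simps)
        ultimately show ?thesis unfolding Q_def by (simp add: mult_ac)
      qed
      also have "ennreal (Q * \<tau> powr (s + 1 - \<beta>)) = ennreal Q * (ennreal (\<tau> powr (s + 1 - \<beta>)) * indicator {\<delta>..} \<tau>)"
        using False Qp by (simp add: ennreal_mult)
      finally show ?thesis .
    qed
    finally show ?thesis .
  qed
  have "(\<integral>\<^sup>+u. indicator (ball 0 \<rho>) u * ennreal ((\<rho>\<^sup>2 - (cmod u)\<^sup>2) powr s / (cmod (1 - c*u)) powr \<beta>) \<partial>lborel)
      = (\<integral>\<^sup>+\<tau>. \<integral>\<^sup>+u. G (u,\<tau>) \<partial>lborel \<partial>lborel)" using step1 step2 by simp
  also have "\<dots> \<le> (\<integral>\<^sup>+\<tau>. ennreal Q * (ennreal (\<tau> powr (s + 1 - \<beta>)) * indicator {\<delta>..} \<tau>) \<partial>lborel)"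
    by (rule nn_integral_mono) (rule step3)
  also have "\<dots> = ennreal Q * (\<integral>\<^sup>+\<tau>. ennreal (\<tau> powr (s + 1 - \<beta>)) * indicator {\<delta>..} \<tau> \<partial>lborel)"
    by (rule nn_integral_cmult) measurable
  also have "\<dots> = ennreal Q * ennreal (\<delta> powr (s + 1 - \<beta> + 1) / (-(s + 1 - \<beta> + 1)))"
    by (subst nn_powr_to_inf) (use dp bs in auto)
  also have "\<dots> = ennreal (Q * (\<delta> powr (s + 1 - \<beta> + 1) / (-(s + 1 - \<beta> + 1))))"
    by (rule ennreal_mult[symmetric]) (use Qp bs in auto)
  also have "\<dots> \<le> ennreal (\<beta> * KM s * 4 powr (s+2) * 2 powr (\<beta>-s-2) / (\<beta>-s-2) * (1 / (1 - (cmod c)\<^sup>2 * \<rho>\<^sup>2) powr (\<beta>-s-2)))"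
    unfolding Q_def a_def
    by (intro ennreal_leI fiber_big_real[OF s1 bs r]) (use c1 c2 in \<open>auto simp: \<delta>_def a_def\<close>)
  finally show ?thesis .
qed

definition KF :: "real \<Rightarrow> real \<Rightarrow> real" where
  "KF s \<beta> = \<beta> * KM s * 4 powr (s+2) * 2 powr (\<beta>-s-2) / (\<beta>-s-2) + 2 powr \<beta> * KM s * 2 powr (s+2)"

lemma KF_pos: assumes "-1 < s" "s + 2 < \<beta>" shows "KF s \<beta> > 0"
proof -
  have K: "KM s > 0" by (rule KM_pos[OF assms(1)])
  have "\<beta> * KM s * 4 powr (s+2) * 2 powr (\<beta>-s-2) / (\<beta>-s-2) > 0"
    using assms K by (intro divide_pos_pos mult_pos_pos) auto
  moreover have "2 powr \<beta> * KM s * 2 powr (s+2) > 0" using K by simp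
  ultimately show ?thesis unfolding KF_def by simp
qed

lemma fiber:
  fixes s \<beta> \<rho> :: real and c :: complex
  assumes s1: "-1 < s" and bs: "s + 2 < \<beta>" and r: "0 < \<rho>" "\<rho> \<le> 1" and c: "cmod c * \<rho> < 1"
  shows "(\<integral>\<^sup>+u. indicator (ball 0 \<rho>) u * ennreal ((\<rho>\<^sup>2 - (cmod u)\<^sup>2) powr s / (cmod (1 - c*u)) powr \<beta>) \<partial>lborel)
     \<le> ennreal (KF s \<beta> * (1 / (1 - (cmod c)\<^sup>2 * \<rho>\<^sup>2) powr (\<beta>-s-2)))"
proof -
  define R where "R = 1 / (1 - (cmod c)\<^sup>2 * \<rho>\<^sup>2) powr (\<beta>-s-2)"
  have K: "KM s > 0" by (rule KM_pos[OF s1])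
  have pos: "1 - (cmod c)\<^sup>2 * \<rho>\<^sup>2 > 0"
  proof -
    have "(cmod c*\<rho>)\<^sup>2 < 1\<^sup>2" using c r by (intro power_strict_mono) auto
    then show ?thesis by (simp add: power_mult_distrib)
  qed
  have le1: "1 - (cmod c)\<^sup>2 * \<rho>\<^sup>2 \<le> 1" by simp
  have R1: "R \<ge> 1"
  proof -
    have "(1 - (cmod c)\<^sup>2 * \<rho>\<^sup>2) powr (\<beta>-s-2) \<le> 1" using pos le1 bs by (intro powr_le1) auto
    moreover have "(1 - (cmod c)\<^sup>2 * \<rho>\<^sup>2) powr (\<beta>-s-2) > 0" using pos by simp
    ultimately show ?thesis unfolding R_def by simp
  qed
  define A where "A = \<beta> * KM s * 4 powr (s+2) * 2 powr (\<beta>-s-2) / (\<beta>-s-2)"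
  define B where "B = 2 powr \<beta> * KM s * 2 powr (s+2)"
  have A: "A \<ge> 0" unfolding A_def using K bs s1 by (intro divide_nonneg_pos mult_nonneg_nonneg) auto
  have B: "B \<ge> 0" unfolding B_def using K by simp
  have KFe: "KF s \<beta> = A + B" unfolding KF_def A_def B_def by simp
  show ?thesis
  proof (cases "cmod c * \<rho> < 1/2")
    case True
    have "(\<integral>\<^sup>+u. indicator (ball 0 \<rho>) u * ennreal ((\<rho>\<^sup>2 - (cmod u)\<^sup>2) powr s / (cmod (1 - c*u)) powr \<beta>) \<partial>lborel)
      \<le> ennreal B" unfolding B_def by (rule fiber_small[OF s1 bs r True])
    also have "\<dots> \<le> ennreal (KF s \<beta> * R)"
    proof (rule ennreal_leI)
      have "B \<le> B * R" using B R1 by (simp add: mult_le_cancel_left1)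
      also have "\<dots> \<le> (A + B) * R" using A R1 by (intro mult_right_mono) auto
      finally show "B \<le> KF s \<beta> * R" using KFe by simp
    qed
    finally show ?thesis unfolding R_def .
  next
    case False
    have "(\<integral>\<^sup>+u. indicator (ball 0 \<rho>) u * ennreal ((\<rho>\<^sup>2 - (cmod u)\<^sup>2) powr s / (cmod (1 - c*u)) powr \<beta>) \<partial>lborel)
      \<le> ennreal (A * R)" unfolding A_def R_def by (rule fiber_big[OF s1 bs r]) (use False c in auto)
    also have "\<dots> \<le> ennreal (KF s \<beta> * R)"
      using B R1 KFe by (intro ennreal_leI mult_right_mono) auto
    finally show ?thesis unfolding R_def .
  qed
qed

lemma dense_Inter:
  fixes \<Omega> :: "nat \<Rightarrow> 'a::topological_space set"
  assumes P: "open P" and fin: "finite I"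
    and op: "\<forall>i\<in>I. open (\<Omega> i)" and dn: "\<forall>i\<in>I. P \<subseteq> closure (\<Omega> i)"
  shows "P \<subseteq> closure (P \<inter> (\<Inter>i\<in>I. \<Omega> i))"
  using fin op dn
proof (induction I rule: finite_induct)
  case empty
  then show ?case by (simp add: closure_subset)
next
  case (insert k I)
  define S where "S = P \<inter> (\<Inter>i\<in>I. \<Omega> i)"
  have So: "open S" unfolding S_def using P insert by (intro open_Int open_INT) auto
  have IH: "P \<subseteq> closure S" unfolding S_def using insert by auto
  have "S \<subseteq> S \<inter> closure (\<Omega> k)" using insert unfolding S_def by auto
  also have "\<dots> \<subseteq> closure (S \<inter> \<Omega> k)" by (rule open_Int_closure_subset[OF So])
  finally have "closure S \<subseteq> closure (S \<inter> \<Omega> k)"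
    by (metis closure_closure closure_mono)
  moreover have "S \<inter> \<Omega> k = P \<inter> (\<Inter>i\<in>insert k I. \<Omega> i)" unfolding S_def by auto
  ultimately show ?case using IH by auto
qed

lemma poly2_holo:
  assumes "is_poly2 p"
  shows "(\<lambda>w. p z w) holomorphic_on UNIV"
proof -
  obtain N c where pc: "\<forall>z w. p z w = (\<Sum>i\<le>N. \<Sum>j\<le>N. c i j * z ^ i * w ^ j)"
    using assms unfolding is_poly2_def by blast
  have "(\<lambda>w. \<Sum>i\<le>N. \<Sum>j\<le>N. c i j * z ^ i * w ^ j) holomorphic_on UNIV"
    by (intro holomorphic_intros)
  then show ?thesis using pc by simp
qed

lemma hbound:
  fixes p :: "complex \<Rightarrow> complex \<Rightarrow> complex"
    and a :: "complex \<Rightarrow> complex"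
    and h :: "nat \<Rightarrow> complex \<Rightarrow> complex"
    and \<Omega> :: "nat \<Rightarrow> complex set"
    and n :: nat and \<epsilon> :: real and j :: nat
  assumes poly: "is_poly2 p"
    and nozero: "\<forall>(z, w)\<in>ball2. p z w \<noteq> 0"
    and eps: "\<epsilon> > 0"
    and a_nz: "\<forall>z\<in>ball 0 \<epsilon>. a z \<noteq> 0"
    and \<Omega>_open: "\<forall>i\<in>{1..n}. open (\<Omega> i)"
    and \<Omega>_sub: "\<forall>i\<in>{1..n}. \<Omega> i \<subseteq> ball 0 \<epsilon> - {0}"
    and \<Omega>_dense: "\<forall>i\<in>{1..n}. ball 0 \<epsilon> - {0} \<subseteq> closure (\<Omega> i)"
    and h_hol: "\<forall>i\<in>{1..n}. h i holomorphic_on \<Omega> i"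
    and factor: "\<forall>z\<in>(\<Inter>i\<in>{1..n}. \<Omega> i). \<forall>w\<in>ball 1 \<epsilon>.
                   p z w = a z * (\<Prod>i=1..n. 1 - h i z * w)"
    and j_range: "j \<in> {1..n}"
  shows "\<forall>x\<in>\<Omega> j. cmod x < 1 \<longrightarrow> (cmod (h j x))\<^sup>2 * (1 - (cmod x)\<^sup>2) \<le> 1"
proof -
  define \<phi> where "\<phi> = (\<lambda>y. (cmod (h j y))\<^sup>2 * (1 - (cmod y)\<^sup>2))"
  have stepa: "\<phi> z \<le> 1" if z: "z \<in> (\<Inter>i\<in>{1..n}. \<Omega> i)" "cmod z < 1" for z
  proof (cases "h j z = 0")
    case True then show ?thesis by (simp add: \<phi>_def)
  next
    case False
    define w0 where "w0 = 1 / h j z"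
    have ident: "p z w = a z * (\<Prod>i=1..n. 1 - h i z * w)" for w
    proof (rule analytic_continuation_open[of "ball 1 \<epsilon>" UNIV "\<lambda>w. p z w" "\<lambda>w. a z * (\<Prod>i=1..n. 1 - h i z * w)"])
      show "ball 1 \<epsilon> \<noteq> {}" using eps by simp
      show "(\<lambda>w. p z w) holomorphic_on UNIV" by (rule poly2_holo[OF poly])
      show "(\<lambda>w. a z * (\<Prod>i=1..n. 1 - h i z * w)) holomorphic_on UNIV" by (intro holomorphic_intros)
      show "\<And>w. w \<in> ball 1 \<epsilon> \<Longrightarrow> p z w = a z * (\<Prod>i=1..n. 1 - h i z * w)"
        using factor z(1) by blast
    qed auto
    have j0: "1 - h j z * w0 = 0" using False by (simp add: w0_def)
    have "(\<Prod>i=1..n. 1 - h i z * w0) = 0"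
      by (rule prod_zero) (simp, use j_range j0 in blast)
    then have "p z w0 = 0" using ident by simp
    then have "(z, w0) \<notin> ball2" using nozero by auto
    then have ge: "(cmod z)\<^sup>2 + (cmod w0)\<^sup>2 \<ge> 1" by (simp add: ball2_def)
    have hp: "(cmod (h j z))\<^sup>2 > 0" using False by simp
    have "(cmod w0)\<^sup>2 = 1 / (cmod (h j z))\<^sup>2" by (simp add: w0_def norm_divide power_one_over)
    then have "1 - (cmod z)\<^sup>2 \<le> 1 / (cmod (h j z))\<^sup>2" using ge by simp
    then have "(cmod (h j z))\<^sup>2 * (1 - (cmod z)\<^sup>2) \<le> (cmod (h j z))\<^sup>2 * (1 / (cmod (h j z))\<^sup>2)"
      using hp by (intro mult_left_mono) auto
    also have "\<dots> = 1" using hp by simp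
    finally show ?thesis by (simp add: \<phi>_def)
  qed
  show ?thesis
  proof (intro ballI impI, rule ccontr)
    fix x assume x: "x \<in> \<Omega> j" "cmod x < 1" and nx: "\<not> (cmod (h j x))\<^sup>2 * (1 - (cmod x)\<^sup>2) \<le> 1"
    have oj: "open (\<Omega> j)" using \<Omega>_open j_range by auto
    have cont: "continuous_on (\<Omega> j) \<phi>"
      unfolding \<phi>_def using h_hol j_range
      by (intro continuous_intros holomorphic_on_imp_continuous_on) auto
    define U where "U = (\<Omega> j \<inter> \<phi> -` {1<..}) \<inter> ball 0 1"
    have "\<forall>B. open B \<longrightarrow> open (\<phi> -` B \<inter> \<Omega> j)"
      using continuous_on_open_vimage[OF oj, of \<phi>] cont by blast
    then have "\<forall>B. open B \<longrightarrow> open (\<Omega> j \<inter> \<phi> -` B)" by (simp add: Int_commute)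
    then have "open (\<Omega> j \<inter> \<phi> -` {1<..})" by simp
    then have Uo: "open U" unfolding U_def by auto
    have xU: "x \<in> U" using x nx by (simp add: U_def \<phi>_def)
    define P where "P = ball (0::complex) \<epsilon> - {0}"
    have Po: "open P" unfolding P_def by auto
    have dense: "P \<subseteq> closure (P \<inter> (\<Inter>i\<in>{1..n}. \<Omega> i))"
      by (rule dense_Inter[OF Po]) (use \<Omega>_open \<Omega>_dense in \<open>auto simp: P_def\<close>)
    have "\<Omega> j \<subseteq> ball 0 \<epsilon> - {0}" using \<Omega>_sub j_range by blast
    then have xP: "x \<in> P" using x unfolding P_def by blast
    have "U \<inter> closure (P \<inter> (\<Inter>i\<in>{1..n}. \<Omega> i)) \<noteq> {}" using xU xP dense by auto
    then have "U \<inter> (P \<inter> (\<Inter>i\<in>{1..n}. \<Omega> i)) \<noteq> {}" using open_Int_closure_eq_empty[OF Uo] by simp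
    then obtain y where y: "y \<in> U" "y \<in> (\<Inter>i\<in>{1..n}. \<Omega> i)" by blast
    then have "\<phi> y \<le> 1" using stepa[of y] by (auto simp: U_def)
    moreover have "\<phi> y > 1" using y by (auto simp: U_def)
    ultimately show False by simp
  qed
qed

theorem mainTheorem9:
  fixes p :: "complex \<Rightarrow> complex \<Rightarrow> complex"
    and a :: "complex \<Rightarrow> complex"
    and h :: "nat \<Rightarrow> complex \<Rightarrow> complex"
    and \<Omega> :: "nat \<Rightarrow> complex set"
    and n :: nat and \<epsilon> s \<beta> b :: real and j :: nat
  assumes poly: "is_poly2 p"
    and nozero: "\<forall>(z, w)\<in>ball2. p z w \<noteq> 0"
    and p01: "p 0 1 = 0"
    and eps: "\<epsilon> > 0"
    and a_hol: "a holomorphic_on ball 0 \<epsilon>"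
    and a_nz: "\<forall>z\<in>ball 0 \<epsilon>. a z \<noteq> 0"
    and \<Omega>_open: "\<forall>i\<in>{1..n}. open (\<Omega> i)"
    and \<Omega>_sub: "\<forall>i\<in>{1..n}. \<Omega> i \<subseteq> ball 0 \<epsilon> - {0}"
    and \<Omega>_dense: "\<forall>i\<in>{1..n}. ball 0 \<epsilon> - {0} \<subseteq> closure (\<Omega> i)"
    and \<Omega>_sc: "\<forall>i\<in>{1..n}. simply_connected (\<Omega> i)"
    and \<Omega>_scale: "\<forall>i\<in>{1..n}. \<forall>z\<in>\<Omega> i. \<forall>r::real. 0 < r \<and> r < 1 \<longrightarrow> of_real r * z \<in> \<Omega> i"
    and h_hol: "\<forall>i\<in>{1..n}. h i holomorphic_on \<Omega> i"
    and h_puiseux: "\<forall>i\<in>{1..n}. puiseux_on (\<Omega> i) (h i)"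
    and factor: "\<forall>z\<in>(\<Inter>i\<in>{1..n}. \<Omega> i). \<forall>w\<in>ball 1 \<epsilon>.
                   p z w = a z * (\<Prod>i=1..n. 1 - h i z * w)"
    and s_gt: "s > -1"
    and b_def: "b = \<beta> - s - 2"
    and b_pos: "b > 0"
    and j_range: "j \<in> {1..n}"
  shows "\<exists>C::real. C > 0 \<and> (\<forall>r::real. 0 < r \<and> r < 1 \<longrightarrow>
     (\<integral>\<^sup>+ zw \<in> ball2 \<inter> (\<Omega> j \<times> ball 1 \<epsilon>).
        ennreal ((1 - (cmod (fst zw))\<^sup>2 - (cmod (snd zw))\<^sup>2) powr s
                 / (cmod (1 - of_real r * h j (of_real r * fst zw) * snd zw)) powr \<beta>) \<partial>lborel)
     \<le> ennreal C * (\<integral>\<^sup>+ z \<in> \<Omega> j.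
        ennreal (1 / (1 - r\<^sup>2 * (cmod (h j (of_real r * z)))\<^sup>2 * (1 - (cmod z)\<^sup>2)) powr b) \<partial>lborel))"
proof -
  have hb: "\<forall>x\<in>\<Omega> j. cmod x < 1 \<longrightarrow> (cmod (h j x))\<^sup>2 * (1 - (cmod x)\<^sup>2) \<le> 1"
    by (rule hbound[OF poly nozero eps a_nz \<Omega>_open \<Omega>_sub \<Omega>_dense h_hol factor j_range])
  have bs: "s + 2 < \<beta>" using b_def b_pos by simp
  define K where "K = KF s \<beta>"
  have Kp: "K > 0" unfolding K_def by (rule KF_pos[OF s_gt bs])
  have oj: "open (\<Omega> j)" using \<Omega>_open j_range by blast
  have ojb[measurable]: "\<Omega> j \<in> sets borel" using oj by simp
  have hcont: "continuous_on (\<Omega> j) (h j)"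
    using h_hol j_range by (intro holomorphic_on_imp_continuous_on) blast
  define hh where "hh = (\<lambda>x. indicator (\<Omega> j) x *\<^sub>R h j x)"
  have hhm[measurable]: "hh \<in> borel_measurable borel"
    unfolding hh_def by (rule borel_measurable_continuous_on_indicator[OF ojb hcont])
  have hh_eq: "hh x = h j x" if "x \<in> \<Omega> j" for x using that by (simp add: hh_def)
  have scale: "of_real r * z \<in> \<Omega> j" if "z \<in> \<Omega> j" "0 < r" "r < 1" for z r
    using \<Omega>_scale j_range that by blast
  show ?thesis
  proof (intro exI[of _ K] conjI allI impI)
    show "K > 0" by (rule Kp)
    fix r :: real assume r: "0 < r \<and> r < 1"
    define E where "E = (\<lambda>zw::complex \<times> complex. (1 - (cmod (fst zw))\<^sup>2 - (cmod (snd zw))\<^sup>2) powr s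
                 / (cmod (1 - of_real r * hh (of_real r * fst zw) * snd zw)) powr \<beta>)"
    define D where "D = {zw::complex \<times> complex. cmod (snd zw) < sqrt (1 - (cmod (fst zw))\<^sup>2)}"
    define H where "H = (\<lambda>zw. indicator (\<Omega> j \<inter> ball 0 1) (fst zw) * (indicator D zw * ennreal (E zw)))"
    define R where "R = (\<lambda>z. 1 / (1 - r\<^sup>2 * (cmod (hh (of_real r * z)))\<^sup>2 * (1 - (cmod z)\<^sup>2)) powr b)"
    have Dopen: "open D" unfolding D_def by (intro open_Collect_less continuous_intros)
    have Dm[measurable]: "D \<in> sets (lborel \<Otimes>\<^sub>M lborel)"
    proof -
      have "sets (lborel \<Otimes>\<^sub>M lborel) = sets (borel :: (complex \<times> complex) measure)"
        by (simp only: lborel_prod sets_lborel)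
      then show ?thesis using borel_open[OF Dopen] by simp
    qed
    have Ob[measurable]: "\<Omega> j \<inter> ball 0 1 \<in> sets borel" using oj by simp
    have Em[measurable]: "E \<in> borel_measurable (lborel \<Otimes>\<^sub>M lborel)"
      unfolding E_def by measurable
    have Hm: "H \<in> borel_measurable (lborel \<Otimes>\<^sub>M lborel)"
      unfolding H_def by measurable
    show "(\<integral>\<^sup>+ zw \<in> ball2 \<inter> (\<Omega> j \<times> ball 1 \<epsilon>).
        ennreal ((1 - (cmod (fst zw))\<^sup>2 - (cmod (snd zw))\<^sup>2) powr s
                 / (cmod (1 - of_real r * h j (of_real r * fst zw) * snd zw)) powr \<beta>) \<partial>lborel)
     \<le> ennreal K * (\<integral>\<^sup>+ z \<in> \<Omega> j.
        ennreal (1 / (1 - r\<^sup>2 * (cmod (h j (of_real r * z)))\<^sup>2 * (1 - (cmod z)\<^sup>2)) powr b) \<partial>lborel)"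
    proof -
      have step1: "(\<integral>\<^sup>+ zw \<in> ball2 \<inter> (\<Omega> j \<times> ball 1 \<epsilon>).
        ennreal ((1 - (cmod (fst zw))\<^sup>2 - (cmod (snd zw))\<^sup>2) powr s
                 / (cmod (1 - of_real r * h j (of_real r * fst zw) * snd zw)) powr \<beta>) \<partial>lborel)
          \<le> (\<integral>\<^sup>+zw. H zw \<partial>lborel)"
      proof (rule nn_integral_mono)
        fix zw :: "complex \<times> complex"
        obtain z w where zw: "zw = (z, w)" by (cases zw)
        show "ennreal ((1 - (cmod (fst zw))\<^sup>2 - (cmod (snd zw))\<^sup>2) powr s
                 / (cmod (1 - of_real r * h j (of_real r * fst zw) * snd zw)) powr \<beta>) * indicator (ball2 \<inter> (\<Omega> j \<times> ball 1 \<epsilon>)) zw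
              \<le> H zw"
        proof (cases "zw \<in> ball2 \<inter> (\<Omega> j \<times> ball 1 \<epsilon>)")
          case False then show ?thesis by simp
        next
          case True
          then have zj: "z \<in> \<Omega> j" and zw2: "(cmod z)\<^sup>2 + (cmod w)\<^sup>2 < 1"
            by (auto simp: zw ball2_def)
          have "(cmod z)\<^sup>2 < 1" using zw2 zero_le_power2[of "cmod w"] by linarith
          then have "(cmod z)\<^sup>2 < 1\<^sup>2" by simp
          then have z1: "cmod z < 1" by (rule power_less_imp_less_base) simp
          have "(cmod w)\<^sup>2 < 1 - (cmod z)\<^sup>2" using zw2 by simp
          then have "cmod w < sqrt (1 - (cmod z)\<^sup>2)" by (rule real_less_rsqrt)
          then have inD: "zw \<in> D" by (simp add: D_def zw)
          have "hh (of_real r * z) = h j (of_real r * z)"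
            by (rule hh_eq[OF scale[OF zj]]) (use r in auto)
          then show ?thesis using inD zj z1 True by (simp add: H_def E_def zw)
        qed
      qed
      have step2: "(\<integral>\<^sup>+zw. H zw \<partial>lborel) = (\<integral>\<^sup>+z. \<integral>\<^sup>+w. H (z,w) \<partial>lborel \<partial>lborel)"
      proof -
        have "(\<integral>\<^sup>+zw. H zw \<partial>lborel) = (\<integral>\<^sup>+zw. H zw \<partial>(lborel \<Otimes>\<^sub>M lborel))"
          by (simp add: lborel_prod)
        also have "\<dots> = (\<integral>\<^sup>+z. \<integral>\<^sup>+w. H (z,w) \<partial>lborel \<partial>lborel)"
          by (rule lborel.nn_integral_fst[symmetric]) (rule Hm)
        finally show ?thesis .
      qed
      have step3: "(\<integral>\<^sup>+w. H (z,w) \<partial>lborel) \<le> ennreal K * (ennreal (R z) * indicator (\<Omega> j) z)" for z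
      proof (cases "z \<in> \<Omega> j \<inter> ball 0 1")
        case False
        then have "(\<integral>\<^sup>+w. H (z,w) \<partial>lborel) = 0" by (simp add: H_def)
        then show ?thesis by simp
      next
        case True
        then have zj: "z \<in> \<Omega> j" and z1: "cmod z < 1" by auto
        define \<rho> where "\<rho> = sqrt (1 - (cmod z)\<^sup>2)"
        define c where "c = of_real r * hh (of_real r * z)"
        have z2: "(cmod z)\<^sup>2 < 1" using z1 by (simp add: abs_square_less_1)
        have rho2: "\<rho>\<^sup>2 = 1 - (cmod z)\<^sup>2" unfolding \<rho>_def using z2 by simp
        have rp: "\<rho> > 0" unfolding \<rho>_def using z2 by simp
        have r1: "\<rho> \<le> 1" unfolding \<rho>_def by simp
        define x where "x = of_real r * z"
        have xj: "x \<in> \<Omega> j" unfolding x_def by (rule scale[OF zj]) (use r in auto)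
        have x1: "cmod x < 1"
        proof -
          have "cmod x = r * cmod z" using r by (simp add: x_def norm_mult)
          also have "\<dots> \<le> 1 * cmod z" using r by (intro mult_right_mono) auto
          finally show ?thesis using z1 by simp
        qed
        have hx: "(cmod (hh x))\<^sup>2 * (1 - (cmod x)\<^sup>2) \<le> 1"
          using hb xj x1 hh_eq[OF xj] by simp
        have cx: "(cmod x)\<^sup>2 = r\<^sup>2 * (cmod z)\<^sup>2" using r by (simp add: x_def norm_mult power_mult_distrib)
        have csq: "(cmod c)\<^sup>2 * \<rho>\<^sup>2 = r\<^sup>2 * (cmod (hh x))\<^sup>2 * (1 - (cmod z)\<^sup>2)"
          using r by (simp add: c_def x_def rho2 norm_mult power_mult_distrib)
        have lt: "r\<^sup>2 * (cmod (hh x))\<^sup>2 * (1 - (cmod z)\<^sup>2) < 1"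
        proof (cases "hh x = 0")
          case True then show ?thesis by simp
        next
          case False
          then have A: "(cmod (hh x))\<^sup>2 > 0" by simp
          have rr: "r\<^sup>2 < 1" using r by (simp add: abs_square_less_1)
          have "r\<^sup>2 * (1 - (cmod z)\<^sup>2) < 1 - r\<^sup>2 * (cmod z)\<^sup>2" using rr by (simp add: algebra_simps)
          then have "(cmod (hh x))\<^sup>2 * (r\<^sup>2 * (1 - (cmod z)\<^sup>2)) < (cmod (hh x))\<^sup>2 * (1 - r\<^sup>2 * (cmod z)\<^sup>2)"
            using A by (rule mult_strict_left_mono)
          also have "\<dots> \<le> 1" using hx cx by simp
          finally show ?thesis by (simp add: mult_ac)
        qed
        have c1: "cmod c * \<rho> < 1"
        proof -
          have "(cmod c * \<rho>)\<^sup>2 < 1\<^sup>2" using csq lt by (simp add: power_mult_distrib)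
          then show ?thesis by (rule power_less_imp_less_base) simp
        qed
        have "(\<integral>\<^sup>+w. H (z,w) \<partial>lborel) = (\<integral>\<^sup>+w. indicator (ball 0 \<rho>) w * ennreal ((\<rho>\<^sup>2 - (cmod w)\<^sup>2) powr s / (cmod (1 - c*w)) powr \<beta>) \<partial>lborel)"
          using True by (intro nn_integral_cong) (simp add: H_def D_def E_def indicator_def \<rho>_def[symmetric] rho2 c_def)
        also have "\<dots> \<le> ennreal (KF s \<beta> * (1 / (1 - (cmod c)\<^sup>2 * \<rho>\<^sup>2) powr (\<beta>-s-2)))"
          by (rule fiber[OF s_gt bs rp r1 c1])
        also have "KF s \<beta> * (1 / (1 - (cmod c)\<^sup>2 * \<rho>\<^sup>2) powr (\<beta>-s-2)) = K * R z"
          by (simp add: K_def R_def csq b_def x_def)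
        also have "ennreal (K * R z) = ennreal K * ennreal (R z)"
          by (rule ennreal_mult) (use Kp in \<open>auto simp: R_def\<close>)
        also have "\<dots> = ennreal K * (ennreal (R z) * indicator (\<Omega> j) z)"
          using zj by simp
        finally show ?thesis .
      qed
      have Rm: "(\<lambda>z. ennreal (R z) * indicator (\<Omega> j) z) \<in> borel_measurable lborel"
        unfolding R_def by measurable
      have step4: "(\<integral>\<^sup>+z. ennreal K * (ennreal (R z) * indicator (\<Omega> j) z) \<partial>lborel) = ennreal K * (\<integral>\<^sup>+z. ennreal (R z) * indicator (\<Omega> j) z \<partial>lborel)"
        by (rule nn_integral_cmult[OF Rm])
      have step5: "(\<integral>\<^sup>+z. ennreal (R z) * indicator (\<Omega> j) z \<partial>lborel) = (\<integral>\<^sup>+ z \<in> \<Omega> j.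
        ennreal (1 / (1 - r\<^sup>2 * (cmod (h j (of_real r * z)))\<^sup>2 * (1 - (cmod z)\<^sup>2)) powr b) \<partial>lborel)"
      proof (intro nn_integral_cong)
        fix z :: complex
        show "ennreal (R z) * indicator (\<Omega> j) z = ennreal (1 / (1 - r\<^sup>2 * (cmod (h j (of_real r * z)))\<^sup>2 * (1 - (cmod z)\<^sup>2)) powr b) * indicator (\<Omega> j) z"
        proof (cases "z \<in> \<Omega> j")
          case True
          have "hh (of_real r * z) = h j (of_real r * z)"
            by (rule hh_eq[OF scale[OF True]]) (use r in auto)
          then show ?thesis by (simp add: R_def)
        qed simp
      qed
      have "(\<integral>\<^sup>+zw. H zw \<partial>lborel) \<le> (\<integral>\<^sup>+z. ennreal K * (ennreal (R z) * indicator (\<Omega> j) z) \<partial>lborel)"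
        unfolding step2 by (intro nn_integral_mono step3)
      then show ?thesis using step1 step4 step5 by simp
    qed
  qed
qed

end
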